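(* Consider an assignment of weight matrices $(W^{(\nu)}\in\mathbb R^{R_\nu\times R_{Pa(\nu)}})_{\nu\in\mathcal T}$ of a hierarchical tensor factorization with mode tree $\mathcal T$ over $[N]$ and end tensor $\mathcal W_H$, and let $B:=\max_{\nu\in\mathcal T}\|W^{(\nu)}\|$. Assume that at each $\nu\in\mathrm{int}(\mathcal T)$ the local components are ordered by their norms, i.e. $\sigma_{\nu,1}\ge\cdots\ge\sigma_{\nu,R_\nu}$. Then for any $\epsilon\ge0$ and $(R'_\nu\in\mathbb N)_{\nu\in\mathrm{int}(\mathcal T)}$, if $\sum_{r=R'_\nu+1}^{R_\nu}\sigma_{\nu,r}\le\epsilon\cdot(|\mathcal T|-N)^{-1}B^{|C(\nu)|+1-|\mathcal T|}$ for all $\nu\in\mathrm{int}(\mathcal T)$, then $$\inf_{\substack{\mathcal W\in\mathbb R^{D_1\times\cdots\times D_N}:\\ \forall\nu\in\mathcal T\setminus\{[N]\}:\ \mathrm{rank}\,[\![\mathcal W;\nu]\!]\le R'_{Pa(\nu)}}}\|\mathcal W_H-\mathcal W\|\le\epsilon,$$ with the convention $R'_{[N]}$ as given for the root ($[N]\in\mathrm{int}(\mathcal T)$).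
   Context: Fix $N\in\mathbb N$, $D_1,\dots,D_N\in\mathbb N$; $[K]:=\{1,\dots,K\}$. Norms are Frobenius norms, $\otimes$ the tensor product. A mode tree $\mathcal T$ over $[N]$ is a rooted tree whose nodes are labeled by subsets of $[N]$, with exactly $N$ leaves labeled $\{1\},\dots,\{N\}$, and where each interior node's label is the union of its children's labels; nodes are identified with labels, root $[N]$, $|\mathcal T|$ the number of nodes, $\mathrm{int}(\mathcal T)$ interior nodes, $Pa(\nu)$ parent, $C(\nu)$ children (fixed order). A hierarchical tensor factorization is given by $R_\nu\in\mathbb N$ ($\nu\in\mathrm{int}(\mathcal T)$), with $R_{Pa([N])}:=1$, $R_{\{n\}}:=D_n$, and weight matrices $W^{(\nu)}\in\mathbb R^{R_\nu\times R_{Pa(\nu)}}$. Intermediate tensors: $\mathcal W^{(\{n\},r)}:=W^{(\{n\})}_{:,r}$; for $\nu\in\mathrm{int}(\mathcal T)\setminus\{[N]\}$ (leaves to root), $r\in[R_{Pa(\nu)}]$: $\mathcal W^{(\nu,r)}:=\pi_\nu\big(\sum_{r'=1}^{R_\nu}W^{(\nu)}_{r',r}\bigotimes_{\nu_c\in C(\nu)}\mathcal W^{(\nu_c,r')}\big)$; end tensor $\mathcal W_H:=\pi_{[N]}\big(\sum_{r'=1}^{R_{[N]}}W^{([N])}_{r',1}\bigotimes_{\nu_c\in C([N])}\mathcal W^{(\nu_c,r')}\big)$, where $\pi_\nu$ permutes modes (ordered by children, each child's elements ascending) into ascending order of the elements of $\nu$. The norm of the $(\nu,r)$'th local component ($\nu\in\mathrm{int}(\mathcal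 T)$, $r\in[R_\nu]$) is $\sigma_{\nu,r}:=\|W^{(\nu)}_{r,:}\|\prod_{\nu_c\in C(\nu)}\|W^{(\nu_c)}_{:,r}\|$. The matricization $[\![\mathcal W;I]\!]$ of $\mathcal W\in\mathbb R^{D_1\times\cdots\times D_N}$ w.r.t. $I\subset[N]$ is its arrangement as a $\prod_{i\in I}D_i\times\prod_{j\notin I}D_j$ matrix whose rows are indexed by the modes in $I$ and columns by the remaining modes (with $I=\{i_1<\dots\}$, $[N]\setminus I=\{j_1<\dots\}$, entry $\mathcal W_{d_1,\dots,d_N}$ goes to row $1+\sum_l(d_{i_l}-1)\prod_{l'<l}D_{i_{l'}}$ and column $1+\sum_l(d_{j_l}-1)\prod_{l'<l}D_{j_{l'}}$). *)

theory Defs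
  imports Complex_Main "Jordan_Normal_Form.DL_Rank"
begin

text \<open>A mode tree over [N], with nodes identified with their labels, is the same as a
laminar family of nonempty subsets of {1..N} containing {1..N} and all singletons.\<close>

definition mode_tree :: "nat \<Rightarrow> nat set set \<Rightarrow> bool" where
  "mode_tree N T \<longleftrightarrow>
     (\<forall>\<nu>\<in>T. \<nu> \<subseteq> {1..N} \<and> \<nu> \<noteq> {}) \<and> {1..N} \<in> T \<and> (\<forall>n\<in>{1..N}. {n} \<in> T) \<and>
     (\<forall>A\<in>T. \<forall>B\<in>T. A \<subseteq> B \<or> B \<subseteq> A \<or> A \<inter> B = {})"

definition children :: "nat set set \<Rightarrow> nat set \<Rightarrow> nat set set" where
  "children T \<nu> = {c \<in> T. c \<subset> \<nu> \<and> \<not> (\<exists>c'\<in>T. c \<subset> c' \<and> c' \<subset> \<nu>)}"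

definition parent :: "nat set set \<Rightarrow> nat set \<Rightarrow> nat set" where
  "parent T \<nu> = (THE p. p \<in> T \<and> \<nu> \<in> children T p)"

definition interior :: "nat set set \<Rightarrow> nat set set" where
  "interior T = {\<nu> \<in> T. children T \<nu> \<noteq> {}}"

text \<open>Weight matrices are given as W :: nat set => nat => nat => real, with
W \<nu> i j the (i+1,j+1) entry of W^(\<nu>) (0-based indices).  The effective number of rows of W^(\<nu>) is rk, with rk {n} = D n for
leaves; its number of columns is prk (R_{Pa(\<nu>)}), with value 1 at the root.\<close>

definition rk :: "nat set set \<Rightarrow> (nat \<Rightarrow> nat) \<Rightarrow> (nat set \<Rightarrow> nat) \<Rightarrow> nat set \<Rightarrow> nat" where
  "rk T D R \<nu> = (if \<nu> \<in> interior T then R \<nu> else D (THE n. \<nu> = {n}))"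

definition prk :: "nat \<Rightarrow> nat set set \<Rightarrow> (nat \<Rightarrow> nat) \<Rightarrow> (nat set \<Rightarrow> nat) \<Rightarrow> nat set \<Rightarrow> nat" where
  "prk N T D R \<nu> = (if \<nu> = {1..N} then 1 else rk T D R (parent T \<nu>))"

text \<open>Tensors in R^{D_1 x ... x D_N} are functions from index tuples d (with
d n < D n, 0-based) to reals; only values on the index box matter.\<close>

definition idx_box :: "nat \<Rightarrow> (nat \<Rightarrow> nat) \<Rightarrow> (nat \<Rightarrow> nat) set" where
  "idx_box N D = PiE {1..N} (\<lambda>n. {..<D n})"

definition tnorm :: "nat \<Rightarrow> (nat \<Rightarrow> nat) \<Rightarrow> ((nat \<Rightarrow> nat) \<Rightarrow> real) \<Rightarrow> real" where
  "tnorm N D X = sqrt (\<Sum>d\<in>idx_box N D. (X d)\<^sup>2)"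

text \<open>Intermediate tensors W^(\<nu>,r), evaluated at an index tuple d (the mode
permutation pi_\<nu> is implicit since modes are addressed by their labels).  The
recursion is on the tree, realised with a fuel argument k; the fuel card \<nu> suffices
since children have strictly smaller cardinality and leaves are singletons.\<close>

fun comp_aux :: "nat set set \<Rightarrow> (nat \<Rightarrow> nat) \<Rightarrow> (nat set \<Rightarrow> nat) \<Rightarrow> (nat set \<Rightarrow> nat \<Rightarrow> nat \<Rightarrow> real)
    \<Rightarrow> nat \<Rightarrow> nat set \<Rightarrow> nat \<Rightarrow> (nat \<Rightarrow> nat) \<Rightarrow> real" where
  "comp_aux T D R W 0 \<nu> r d = 0"
| "comp_aux T D R W (Suc k) \<nu> r d =
     (if \<nu> \<in> interior T then
        (\<Sum>r'<R \<nu>. W \<nu> r' r * (\<Prod>c\<in>children T \<nu>. comp_aux T D R W k c r' d))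
      else W \<nu> (d (THE n. \<nu> = {n})) r)"

definition comp :: "nat set set \<Rightarrow> (nat \<Rightarrow> nat) \<Rightarrow> (nat set \<Rightarrow> nat) \<Rightarrow> (nat set \<Rightarrow> nat \<Rightarrow> nat \<Rightarrow> real)
    \<Rightarrow> nat set \<Rightarrow> nat \<Rightarrow> (nat \<Rightarrow> nat) \<Rightarrow> real" where
  "comp T D R W \<nu> r d = comp_aux T D R W (card \<nu>) \<nu> r d"

definition end_tensor :: "nat \<Rightarrow> nat set set \<Rightarrow> (nat \<Rightarrow> nat) \<Rightarrow> (nat set \<Rightarrow> nat)
    \<Rightarrow> (nat set \<Rightarrow> nat \<Rightarrow> nat \<Rightarrow> real) \<Rightarrow> (nat \<Rightarrow> nat) \<Rightarrow> real" where
  "end_tensor N T D R W d = comp T D R W {1..N} 0 d"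

definition wnorm where
  "wnorm N T D R W \<nu> = sqrt (\<Sum>i<rk T D R \<nu>. \<Sum>j<prk N T D R \<nu>. (W \<nu> i j)\<^sup>2)"

definition rownorm where
  "rownorm N T D R W \<nu> r = sqrt (\<Sum>j<prk N T D R \<nu>. (W \<nu> r j)\<^sup>2)"

definition colnorm where
  "colnorm N T D R W \<nu> r = sqrt (\<Sum>i<rk T D R \<nu>. (W \<nu> i r)\<^sup>2)"

text \<open>Norm of the local component (\<nu>, r+1).\<close>
definition sigma where
  "sigma N T D R W \<nu> r =
     rownorm N T D R W \<nu> r * (\<Prod>c\<in>children T \<nu>. colnorm N T D R W c r)"

text \<open>Mixed-radix digit of position i in a linear index p over the modes I
(little-endian, as in the paper, 0-based).\<close>
definition digit :: "(nat \<Rightarrow> nat) \<Rightarrow> nat set \<Rightarrow> nat \<Rightarrow> nat \<Rightarrow> nat" where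
  "digit D I p i = (p div (\<Prod>j\<in>{j\<in>I. j < i}. D j)) mod D i"

definition decode :: "nat \<Rightarrow> (nat \<Rightarrow> nat) \<Rightarrow> nat set \<Rightarrow> nat \<Rightarrow> nat \<Rightarrow> (nat \<Rightarrow> nat)" where
  "decode N D I p q = (\<lambda>i. if i \<in> I then digit D I p i
                           else if i \<in> {1..N} - I then digit D ({1..N} - I) q i
                           else undefined)"

definition matricize :: "nat \<Rightarrow> (nat \<Rightarrow> nat) \<Rightarrow> ((nat \<Rightarrow> nat) \<Rightarrow> real) \<Rightarrow> nat set \<Rightarrow> real mat" where
  "matricize N D X I = mat (\<Prod>i\<in>I. D i) (\<Prod>j\<in>{1..N} - I. D j)
      (\<lambda>(p, q). X (decode N D I p q))"

definition mrank :: "real mat \<Rightarrow> nat" where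
  "mrank A = vec_space.rank (dim_row A) A"

end

theory Submission
  imports Defs
begin


locale mtree =
  fixes N :: nat and T :: "nat set set"
  assumes tree: "mode_tree N T"
begin

lemma T_sub: "\<nu> \<in> T \<Longrightarrow> \<nu> \<subseteq> {1..N}" using tree unfolding mode_tree_def by blast
lemma T_ne: "\<nu> \<in> T \<Longrightarrow> \<nu> \<noteq> {}" using tree unfolding mode_tree_def by blast
lemma T_fin: "\<nu> \<in> T \<Longrightarrow> finite \<nu>" using T_sub by (meson finite_atLeastAtMost finite_subset)
lemma root_T: "{1..N} \<in> T" using tree unfolding mode_tree_def by blast
lemma single_T: "n \<in> {1..N} \<Longrightarrow> {n} \<in> T" using tree unfolding mode_tree_def by blast
lemma lam: "A \<in> T \<Longrightarrow> B \<in> T \<Longrightarrow> A \<subseteq> B \<or> B \<subseteq> A \<or> A \<inter> B = {}"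
  using tree unfolding mode_tree_def by blast
lemma finite_T: "finite T"
proof -
  have "T \<subseteq> Pow {1..N}" using T_sub by blast
  then show ?thesis by (rule finite_subset) simp
qed
lemma card_T_ge1: "\<nu> \<in> T \<Longrightarrow> 1 \<le> card \<nu>"
  using T_fin T_ne by (simp add: Suc_leI card_gt_0_iff)

lemma ch_T: "c \<in> children T \<nu> \<Longrightarrow> c \<in> T \<and> c \<subset> \<nu>"
  unfolding children_def by blast
lemma ch_card: "\<nu> \<in> T \<Longrightarrow> c \<in> children T \<nu> \<Longrightarrow> card c < card \<nu>"
  by (meson ch_T T_fin psubset_card_mono)
lemma ch_fin: "finite (children T \<nu>)"
proof -
  have "children T \<nu> \<subseteq> T" using ch_T by blast
  then show ?thesis using finite_T by (rule finite_subset)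
qed
lemma ch_max: "c \<in> children T \<nu> \<Longrightarrow> c' \<in> T \<Longrightarrow> c \<subset> c' \<Longrightarrow> c' \<subset> \<nu> \<Longrightarrow> False"
  unfolding children_def by blast

lemma ch_I: "c \<in> T \<Longrightarrow> c \<subset> \<nu> \<Longrightarrow> (\<And>c'. c' \<in> T \<Longrightarrow> c \<subset> c' \<Longrightarrow> c' \<subset> \<nu> \<Longrightarrow> False)
   \<Longrightarrow> c \<in> children T \<nu>"
  unfolding children_def by blast

lemma ch_disj:
  assumes "c1 \<in> children T \<nu>" "c2 \<in> children T \<nu>" "c1 \<noteq> c2"
  shows "c1 \<inter> c2 = {}"
proof -
  have T: "c1 \<in> T" "c2 \<in> T" and s: "c1 \<subset> \<nu>" "c2 \<subset> \<nu>" using assms ch_T by auto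
  have "\<not> c1 \<subset> c2" using ch_max[OF assms(1) T(2) _ s(2)] by blast
  moreover have "\<not> c2 \<subset> c1" using ch_max[OF assms(2) T(1) _ s(1)] by blast
  ultimately show ?thesis using lam[OF T] assms(3) by blast
qed

lemma exists_child:
  assumes "\<mu> \<in> T" "\<mu> \<subset> \<nu>"
  shows "\<exists>c\<in>children T \<nu>. \<mu> \<subseteq> c"
proof -
  let ?S = "{c\<in>T. \<mu> \<subseteq> c \<and> c \<subset> \<nu>}"
  have fin: "finite ?S" using finite_T by auto
  have "\<mu> \<in> ?S" using assms by auto
  then have ne: "?S \<noteq> {}" by blast
  from finite_has_maximal[OF fin ne] obtain c where c: "c \<in> ?S" "\<forall>b\<in>?S. c \<le> b \<longrightarrow> c = b"
    by blast
  have "c \<in> children T \<nu>"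
  proof (rule ch_I)
    show "c \<in> T" "c \<subset> \<nu>" using c(1) by auto
    fix c' assume "c' \<in> T" "c \<subset> c'" "c' \<subset> \<nu>"
    then have "c' \<in> ?S" using c(1) by auto
    then show False using c(2) \<open>c \<subset> c'\<close> by blast
  qed
  then show ?thesis using c by auto
qed

lemma union_ch:
  assumes "\<nu> \<in> T" "2 \<le> card \<nu>"
  shows "\<Union>(children T \<nu>) = \<nu>"
proof
  show "\<Union>(children T \<nu>) \<subseteq> \<nu>" using ch_T by blast
  show "\<nu> \<subseteq> \<Union>(children T \<nu>)"
  proof
    fix n assume n: "n \<in> \<nu>"
    then have "{n} \<in> T" using T_sub assms single_T by blast
    have ne: "{n} \<noteq> \<nu>" using assms(2) by auto
    moreover have "{n} \<subset> \<nu>" using n ne by auto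
    ultimately obtain c where "c \<in> children T \<nu>" "{n} \<subseteq> c" using exists_child \<open>{n} \<in> T\<close> by blast
    then show "n \<in> \<Union>(children T \<nu>)" by blast
  qed
qed

lemma int_iff:
  assumes "\<nu> \<in> T" shows "\<nu> \<in> interior T \<longleftrightarrow> 2 \<le> card \<nu>"
proof
  assume "\<nu> \<in> interior T"
  then obtain c where c: "c \<in> children T \<nu>" unfolding interior_def by blast
  then have "card c < card \<nu>" "1 \<le> card c" using ch_card ch_T card_T_ge1 assms by auto
  then show "2 \<le> card \<nu>" by linarith
next
  assume "2 \<le> card \<nu>"
  then have "\<Union>(children T \<nu>) = \<nu>" using union_ch assms by blast
  then have "children T \<nu> \<noteq> {}" using assms T_ne by (metis Union_empty)
  then show "\<nu> \<in> interior T" using assms unfolding interior_def by auto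
qed

lemma int_T: "\<nu> \<in> interior T \<Longrightarrow> \<nu> \<in> T" unfolding interior_def by blast

lemma leaf:
  assumes "\<nu> \<in> T" "\<nu> \<notin> interior T"
  shows "\<exists>n\<in>{1..N}. \<nu> = {n}"
proof -
  have a: "\<not> 2 \<le> card \<nu>" using int_iff[OF assms(1)] assms by blast
  have b: "1 \<le> card \<nu>" using card_T_ge1 assms by blast
  from a b have "card \<nu> = 1" by linarith
  then obtain n where "\<nu> = {n}" using card_1_singletonE by blast
  then show ?thesis using T_sub[OF assms(1)] by blast
qed

lemma single_not_int: "{n} \<notin> interior T"
  using int_iff int_T by fastforce

lemma parent_eq:
  assumes "\<nu> \<in> T" "c \<in> children T \<nu>"
  shows "parent T c = \<nu>"
  unfolding parent_def
proof (rule the_equality)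
  show "\<nu> \<in> T \<and> c \<in> children T \<nu>" using assms by auto
  fix p assume p: "p \<in> T \<and> c \<in> children T p"
  have "c \<in> T" using ch_T assms by blast
  then have "c \<noteq> {}" using T_ne by blast
  have cp: "c \<subset> p" and cn: "c \<subset> \<nu>" using p assms ch_T by auto
  have "\<not> p \<subset> \<nu>" using ch_max[OF assms(2) _ cp] p by blast
  moreover have "\<not> \<nu> \<subset> p" using ch_max[OF conjunct2[OF p] assms(1) cn] by blast
  moreover have "p \<inter> \<nu> \<noteq> {}" using cp cn \<open>c \<noteq> {}\<close> by blast
  ultimately show "p = \<nu>" using lam[OF conjunct1[OF p] assms(1)] by blast
qed

lemma parent_ex:
  assumes "\<nu> \<in> T" "\<nu> \<noteq> {1..N}"
  shows "\<exists>p\<in>T. \<nu> \<in> children T p"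
proof -
  let ?S = "{p\<in>T. \<nu> \<subset> p}"
  have fin: "finite ?S" using finite_T by auto
  have "\<nu> \<subset> {1..N}" using assms T_sub by blast
  then have "{1..N} \<in> ?S" using root_T by blast
  then have ne: "?S \<noteq> {}" by blast
  from finite_has_minimal[OF fin ne] obtain p where p: "p \<in> ?S" "\<forall>b\<in>?S. b \<le> p \<longrightarrow> p = b"
    by blast
  have "\<nu> \<in> children T p"
  proof (rule ch_I)
    show "\<nu> \<in> T" "\<nu> \<subset> p" using p assms by auto
    fix c' assume "c' \<in> T" "\<nu> \<subset> c'" "c' \<subset> p"
    then have "c' \<in> ?S" by auto
    then show False using p(2) \<open>c' \<subset> p\<close> by blast
  qed
  then show ?thesis using p by auto
qed

lemma parent_int:
  assumes "\<nu> \<in> T" "\<nu> \<noteq> {1..N}"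
  shows "parent T \<nu> \<in> interior T" "\<nu> \<in> children T (parent T \<nu>)"
proof -
  obtain p where p: "p \<in> T" "\<nu> \<in> children T p" using parent_ex assms by blast
  then have "parent T \<nu> = p" using parent_eq by blast
  then show "parent T \<nu> \<in> interior T" "\<nu> \<in> children T (parent T \<nu>)"
    using p unfolding interior_def by auto
qed

definition sub :: "nat set \<Rightarrow> nat set set" where "sub \<nu> = {\<mu>\<in>T. \<mu> \<subseteq> \<nu>}"

lemma sub_fin: "finite (sub \<nu>)" unfolding sub_def using finite_T by auto

lemma sub_decomp:
  assumes "\<nu> \<in> interior T"
  shows "sub \<nu> = insert \<nu> (\<Union>c\<in>children T \<nu>. sub c)"
proof
  show "sub \<nu> \<subseteq> insert \<nu> (\<Union>c\<in>children T \<nu>. sub c)"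
  proof
    fix \<mu> assume "\<mu> \<in> sub \<nu>"
    then have m: "\<mu> \<in> T" "\<mu> \<subseteq> \<nu>" unfolding sub_def by auto
    show "\<mu> \<in> insert \<nu> (\<Union>c\<in>children T \<nu>. sub c)"
    proof (cases "\<mu> = \<nu>")
      case False
      then have "\<mu> \<subset> \<nu>" using m by auto
      then obtain c where "c \<in> children T \<nu>" "\<mu> \<subseteq> c" using exists_child m by blast
      then show ?thesis using m unfolding sub_def by auto
    qed simp
  qed
  have "\<nu> \<in> sub \<nu>" unfolding sub_def using int_T assms by auto
  moreover have "sub c \<subseteq> sub \<nu>" if "c \<in> children T \<nu>" for c
    using ch_T[OF that] unfolding sub_def by auto
  ultimately show "insert \<nu> (\<Union>c\<in>children T \<nu>. sub c) \<subseteq> sub \<nu>" by blast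
qed

lemma sub_disj:
  assumes "c1 \<in> children T \<nu>" "c2 \<in> children T \<nu>" "c1 \<noteq> c2"
  shows "sub c1 \<inter> sub c2 = {}"
proof -
  have "False" if "\<mu> \<in> sub c1" "\<mu> \<in> sub c2" for \<mu>
  proof -
    have "\<mu> \<in> T" "\<mu> \<subseteq> c1" "\<mu> \<subseteq> c2" using that unfolding sub_def by auto
    then have "\<mu> \<subseteq> c1 \<inter> c2" by blast
    then show False using ch_disj[OF assms] T_ne[OF \<open>\<mu> \<in> T\<close>] by blast
  qed
  then show ?thesis by blast
qed

lemma nu_notin_sub_ch: "c \<in> children T \<nu> \<Longrightarrow> \<nu> \<notin> sub c"
proof
  assume a: "c \<in> children T \<nu>" "\<nu> \<in> sub c"
  then have "\<nu> \<subseteq> c" unfolding sub_def by auto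
  with ch_T[OF a(1)] show False by auto
qed

lemma card_sub:
  assumes "\<nu> \<in> interior T"
  shows "card (sub \<nu>) = 1 + (\<Sum>c\<in>children T \<nu>. card (sub c))"
proof -
  have "card (sub \<nu>) = card (insert \<nu> (\<Union>c\<in>children T \<nu>. sub c))" using sub_decomp[OF assms] by simp
  also have "\<dots> = 1 + card (\<Union>c\<in>children T \<nu>. sub c)"
    using nu_notin_sub_ch sub_fin ch_fin by (subst card_insert_disjoint) auto
  also have "card (\<Union>c\<in>children T \<nu>. sub c) = (\<Sum>c\<in>children T \<nu>. card (sub c))"
    using sub_disj sub_fin ch_fin by (intro card_UN_disjoint) auto
  finally show ?thesis .
qed

lemma card_sub_ge1: "\<nu> \<in> T \<Longrightarrow> 1 \<le> card (sub \<nu>)"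
proof -
  assume "\<nu> \<in> T"
  then have "\<nu> \<in> sub \<nu>" unfolding sub_def by auto
  then have "sub \<nu> \<noteq> {}" by auto
  then show ?thesis using sub_fin[of \<nu>] by (simp add: Suc_leI card_gt_0_iff)
qed

lemma card_ch_le:
  assumes "\<nu> \<in> interior T"
  shows "card (children T \<nu>) + 1 \<le> card (sub \<nu>)"
proof -
  have "card (children T \<nu>) = (\<Sum>c\<in>children T \<nu>. 1)" by simp
  also have "\<dots> \<le> (\<Sum>c\<in>children T \<nu>. card (sub c))"
    by (intro sum_mono card_sub_ge1) (use ch_T in blast)
  finally show ?thesis using card_sub[OF assms] by linarith
qed

lemma sub_leaf: "{n} \<in> T \<Longrightarrow> sub {n} = {{n}}"
  unfolding sub_def using T_ne by (auto simp: subset_singleton_iff)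

lemma sub_root: "sub {1..N} = T" unfolding sub_def using T_sub by auto

lemma sub_mono: "\<mu> \<in> sub \<nu> \<Longrightarrow> sub \<mu> \<subseteq> sub \<nu>" unfolding sub_def by auto

lemma int_sub_decomp:
  assumes "\<nu> \<in> interior T"
  shows "interior T \<inter> sub \<nu> = insert \<nu> (\<Union>c\<in>children T \<nu>. interior T \<inter> sub c)"
proof -
  have "interior T \<inter> sub \<nu> = interior T \<inter> insert \<nu> (\<Union>c\<in>children T \<nu>. sub c)"
    using sub_decomp[OF assms] by simp
  also have "\<dots> = insert \<nu> (\<Union>c\<in>children T \<nu>. interior T \<inter> sub c)" using assms by blast
  finally show ?thesis .
qed

lemma int_sub_leaf: "{n} \<in> T \<Longrightarrow> interior T \<inter> sub {n} = {}"
  using sub_leaf single_not_int by auto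

lemma card_interior: "card (interior T) = card T - N"
proof -
  have e: "interior T = T - (\<lambda>n. {n}) ` {1..N}"
  proof
    show "interior T \<subseteq> T - (\<lambda>n. {n}) ` {1..N}" using int_T single_not_int by auto
    show "T - (\<lambda>n. {n}) ` {1..N} \<subseteq> interior T" using leaf by blast
  qed
  have "card ((\<lambda>n. {n}) ` {1..N}) = N" by (subst card_image) (auto simp: inj_on_def)
  moreover have "(\<lambda>n. {n}) ` {1..N} \<subseteq> T" using single_T by auto
  ultimately show ?thesis unfolding e using finite_T by (simp add: card_Diff_subset)
qed

end


context mtree begin

lemma comp_aux_fuel:
  assumes "\<nu> \<in> T" "card \<nu> \<le> k"
  shows "comp_aux T D Q W k \<nu> r d = comp_aux T D Q W (card \<nu>) \<nu> r d"
  using assms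
proof (induction "card \<nu>" arbitrary: \<nu> k r d rule: less_induct)
  case less
  obtain m where m: "card \<nu> = Suc m" using card_T_ge1[OF less.prems(1)] by (cases "card \<nu>") auto
  obtain k' where k: "k = Suc k'" using less.prems(2) m by (cases k) auto
  have "comp_aux T D Q W k' c r' d = comp_aux T D Q W m c r' d" if "c \<in> children T \<nu>" for c r'
  proof -
    have c: "c \<in> T" "card c < card \<nu>" using that ch_T ch_card less.prems by auto
    then have "comp_aux T D Q W k' c r' d = comp_aux T D Q W (card c) c r' d"
      using less.hyps[of c k'] less.prems m k by auto
    moreover have "comp_aux T D Q W m c r' d = comp_aux T D Q W (card c) c r' d"
      using less.hyps[of c m] c m by auto
    ultimately show ?thesis by simp
  qed
  then show ?case unfolding k m by (auto intro!: sum.cong prod.cong)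
qed

lemma comp_int:
  assumes "\<nu> \<in> interior T"
  shows "comp T D Q W \<nu> r d = (\<Sum>r'<Q \<nu>. W \<nu> r' r * (\<Prod>c\<in>children T \<nu>. comp T D Q W c r' d))"
proof -
  have nT: "\<nu> \<in> T" using assms int_T by blast
  obtain m where m: "card \<nu> = Suc m" using card_T_ge1[OF nT] by (cases "card \<nu>") auto
  have "comp_aux T D Q W m c r' d = comp T D Q W c r' d" if "c \<in> children T \<nu>" for c r'
  proof -
    have c: "c \<in> T" "card c < card \<nu>" using that ch_T ch_card nT by auto
    then show ?thesis unfolding comp_def using comp_aux_fuel[of c m] m by auto
  qed
  then show ?thesis unfolding comp_def m using assms by (auto intro!: sum.cong prod.cong)
qed

lemma comp_leaf:
  shows "comp T D Q W {n} r d = W {n} (d n) r"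
  unfolding comp_def using single_not_int by simp

lemma comp_local:
  assumes "\<nu> \<in> T" "\<forall>i\<in>\<nu>. d i = d' i"
  shows "comp T D Q W \<nu> r d = comp T D Q W \<nu> r d'"
  using assms
proof (induction "card \<nu>" arbitrary: \<nu> r rule: less_induct)
  case less
  show ?case
  proof (cases "\<nu> \<in> interior T")
    case True
    have "comp T D Q W c r' d = comp T D Q W c r' d'" if "c \<in> children T \<nu>" for c r'
    proof -
      have "\<forall>i\<in>c. d i = d' i" using ch_T[OF that] less.prems(2) by blast
      moreover have "c \<in> T" "card c < card \<nu>" using ch_T[OF that] ch_card[OF less.prems(1) that] by auto
      ultimately show ?thesis using less.hyps[of c r'] by blast
    qed
    then show ?thesis using comp_int[OF True] by (auto intro!: sum.cong prod.cong)
  next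
    case False
    then obtain n where "\<nu> = {n}" using leaf less.prems by blast
    then show ?thesis using comp_leaf less.prems by simp
  qed
qed

end


definition box :: "(nat \<Rightarrow> nat) \<Rightarrow> nat set \<Rightarrow> (nat \<Rightarrow> nat) set" where
  "box D A = PiE A (\<lambda>n. {..<D n})"

lemma box_fin: "finite A \<Longrightarrow> finite (box D A)"
  unfolding box_def by (intro finite_PiE) auto

lemma box_mem: "d \<in> box D A \<longleftrightarrow> (\<forall>i\<in>A. d i < D i) \<and> (\<forall>i. i \<notin> A \<longrightarrow> d i = undefined)"
  unfolding box_def PiE_def Pi_def extensional_def by auto

lemma box_bij:
  assumes "A \<inter> B = {}"
  shows "bij_betw (\<lambda>d. (restrict d A, restrict d B)) (box D (A \<union> B)) (box D A \<times> box D B)"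
  unfolding bij_betw_def
proof
  show "inj_on (\<lambda>d. (restrict d A, restrict d B)) (box D (A \<union> B))"
  proof (rule inj_onI)
    fix x y assume xy: "x \<in> box D (A \<union> B)" "y \<in> box D (A \<union> B)"
      "(restrict x A, restrict x B) = (restrict y A, restrict y B)"
    have xA: "restrict x A = restrict y A" and xB: "restrict x B = restrict y B" using xy(3) by auto
    show "x = y"
    proof
      fix i
      show "x i = y i"
      proof (cases "i \<in> A")
        case True
        then show ?thesis using fun_cong[OF xA, of i] by simp
      next
        case nA: False
        show ?thesis
        proof (cases "i \<in> B")
          case True
          then show ?thesis using fun_cong[OF xB, of i] by simp
        next
          case False
          then show ?thesis using nA xy(1,2) unfolding box_mem by simp
        qed
      qed
    qed
  qed
  show "(\<lambda>d. (restrict d A, restrict d B)) ` box D (A \<union> B) = box D A \<times> box D B"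
  proof
    show "(\<lambda>d. (restrict d A, restrict d B)) ` box D (A \<union> B) \<subseteq> box D A \<times> box D B"
    proof
      fix p assume "p \<in> (\<lambda>d. (restrict d A, restrict d B)) ` box D (A \<union> B)"
      then obtain d where d: "d \<in> box D (A \<union> B)" "p = (restrict d A, restrict d B)" by blast
      have "restrict d A \<in> box D A" using d(1) unfolding box_mem by simp
      moreover have "restrict d B \<in> box D B" using d(1) unfolding box_mem by simp
      ultimately show "p \<in> box D A \<times> box D B" using d(2) by simp
    qed
    show "box D A \<times> box D B \<subseteq> (\<lambda>d. (restrict d A, restrict d B)) ` box D (A \<union> B)"
    proof
      fix p assume p: "p \<in> box D A \<times> box D B"
      obtain x y where xy: "p = (x, y)" "x \<in> box D A" "y \<in> box D B" using p by auto
      define d where "d = (\<lambda>i. if i \<in> A then x i else y i)"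
      have "d \<in> box D (A \<union> B)" using xy(2,3) unfolding box_mem d_def by auto
      moreover have "restrict d A = x"
      proof
        fix i show "restrict d A i = x i" using xy(2) unfolding box_mem d_def by simp
      qed
      moreover have "restrict d B = y"
      proof
        fix i show "restrict d B i = y i" using xy(3) assms unfolding box_mem d_def by auto
      qed
      ultimately show "p \<in> (\<lambda>d. (restrict d A, restrict d B)) ` box D (A \<union> B)"
        using xy(1) by (metis (no_types, lifting) image_eqI)
    qed
  qed
qed

lemma box_split:
  fixes f g :: "(nat \<Rightarrow> nat) \<Rightarrow> real"
  assumes "A \<inter> B = {}" "finite A" "finite B"
    and f: "\<And>d d'. \<forall>i\<in>A. d i = d' i \<Longrightarrow> f d = f d'"
    and g: "\<And>d d'. \<forall>i\<in>B. d i = d' i \<Longrightarrow> g d = g d'"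
  shows "(\<Sum>d\<in>box D (A \<union> B). f d * g d) = (\<Sum>d\<in>box D A. f d) * (\<Sum>d\<in>box D B. g d)"
proof -
  have "(\<Sum>d\<in>box D (A \<union> B). f d * g d) =
        (\<Sum>d\<in>box D (A \<union> B). (\<lambda>(x,y). f x * g y) (restrict d A, restrict d B))"
  proof (rule sum.cong)
    fix d
    have "f d = f (restrict d A)" by (rule f) simp
    moreover have "g d = g (restrict d B)" by (rule g) simp
    ultimately show "f d * g d = (\<lambda>(x,y). f x * g y) (restrict d A, restrict d B)" by simp
  qed simp
  also have "\<dots> = (\<Sum>p\<in>box D A \<times> box D B. (\<lambda>(x,y). f x * g y) p)"
    by (rule sum.reindex_bij_betw[OF box_bij[OF assms(1)]])
  also have "\<dots> = (\<Sum>x\<in>box D A. \<Sum>y\<in>box D B. f x * g y)"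
    by (simp add: sum.cartesian_product)
  also have "\<dots> = (\<Sum>d\<in>box D A. f d) * (\<Sum>d\<in>box D B. g d)"
    by (rule sum_product[symmetric])
  finally show ?thesis .
qed

lemma box_prod:
  fixes f :: "nat set \<Rightarrow> (nat \<Rightarrow> nat) \<Rightarrow> real"
  assumes "finite C" "\<forall>c\<in>C. finite c" "\<forall>c1\<in>C. \<forall>c2\<in>C. c1 \<noteq> c2 \<longrightarrow> c1 \<inter> c2 = {}"
    and "\<forall>c\<in>C. \<forall>d d'. (\<forall>i\<in>c. d i = d' i) \<longrightarrow> f c d = f c d'"
  shows "(\<Sum>d\<in>box D (\<Union>C). \<Prod>c\<in>C. f c d) = (\<Prod>c\<in>C. \<Sum>d\<in>box D c. f c d)"
  using assms
proof (induction C rule: finite_induct)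
  case empty
  have "box D {} = {\<lambda>x. undefined}" unfolding box_def by simp
  then show ?case by simp
next
  case (insert x S)
  have fx: "finite x" and fS: "\<forall>c\<in>S. finite c" using insert.prems(1) by auto
  have dS: "\<forall>c1\<in>S. \<forall>c2\<in>S. c1 \<noteq> c2 \<longrightarrow> c1 \<inter> c2 = {}" using insert.prems(2) by blast
  have lS: "\<forall>c\<in>S. \<forall>d d'. (\<forall>i\<in>c. d i = d' i) \<longrightarrow> f c d = f c d'" using insert.prems(3) by blast
  have lx: "\<forall>d d'. (\<forall>i\<in>x. d i = d' i) \<longrightarrow> f x d = f x d'" using insert.prems(3) by blast
  have disj: "x \<inter> \<Union> S = {}"
  proof -
    have "x \<inter> c = {}" if "c \<in> S" for c
      using insert.prems(2) that insert.hyps(2) by (metis insertCI)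
    then show ?thesis by blast
  qed
  have IH: "(\<Sum>d\<in>box D (\<Union>S). \<Prod>c\<in>S. f c d) = (\<Prod>c\<in>S. \<Sum>d\<in>box D c. f c d)"
    using insert.IH[OF fS dS lS] .
  have "(\<Sum>d\<in>box D (\<Union>(insert x S)). \<Prod>c\<in>insert x S. f c d)
      = (\<Sum>d\<in>box D (x \<union> \<Union>S). f x d * (\<Prod>c\<in>S. f c d))"
    using insert.hyps by (simp add: prod.insert)
  also have "\<dots> = (\<Sum>d\<in>box D x. f x d) * (\<Sum>d\<in>box D (\<Union>S). \<Prod>c\<in>S. f c d)"
  proof (rule box_split[OF disj fx])
    show "finite (\<Union>S)" using insert.hyps(1) fS by blast
    show "\<And>d d'. \<forall>i\<in>x. d i = d' i \<Longrightarrow> f x d = f x d'" using lx by blast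
    fix d d' :: "nat \<Rightarrow> nat" assume a: "\<forall>i\<in>\<Union>S. d i = d' i"
    have "f c d = f c d'" if "c \<in> S" for c using lS that a by blast
    then show "(\<Prod>c\<in>S. f c d) = (\<Prod>c\<in>S. f c d')" by (rule prod.cong[OF refl])
  qed
  also have "\<dots> = (\<Prod>c\<in>insert x S. \<Sum>d\<in>box D c. f c d)"
    using IH insert.hyps by (simp add: prod.insert)
  finally show ?case .
qed

lemma box_single:
  fixes f :: "nat \<Rightarrow> real"
  shows "(\<Sum>d\<in>box D {n}. f (d n)) = (\<Sum>k<D n. f k)"
proof -
  have "bij_betw (\<lambda>d. d n) (box D {n}) {..<D n}"
    unfolding bij_betw_def
  proof
    show "inj_on (\<lambda>d. d n) (box D {n})"
    proof (rule inj_onI)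
      fix x y assume "x \<in> box D {n}" "y \<in> box D {n}" "x n = y n"
      show "x = y"
      proof
        fix i show "x i = y i"
          using \<open>x \<in> box D {n}\<close> \<open>y \<in> box D {n}\<close> \<open>x n = y n\<close> unfolding box_mem
          by (cases "i = n") auto
      qed
    qed
    show "(\<lambda>d. d n) ` box D {n} = {..<D n}"
    proof
      show "(\<lambda>d. d n) ` box D {n} \<subseteq> {..<D n}" by (auto simp: box_mem)
      show "{..<D n} \<subseteq> (\<lambda>d. d n) ` box D {n}"
      proof
        fix k assume k: "k \<in> {..<D n}"
        have "(\<lambda>i. if i = n then k else undefined) \<in> box D {n}"
          using k unfolding box_mem by auto
        then show "k \<in> (\<lambda>d. d n) ` box D {n}" by (rule rev_image_eqI) simp
      qed
    qed
  qed
  then show ?thesis by (rule sum.reindex_bij_betw)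
qed


definition l2 :: "('a \<Rightarrow> real) \<Rightarrow> 'a set \<Rightarrow> real" where
  "l2 f A = sqrt (\<Sum>x\<in>A. (f x)\<^sup>2)"

lemma l2_nonneg: "0 \<le> l2 f A"
  unfolding l2_def by (simp add: sum_nonneg)

lemma l2_sq: "(l2 f A)\<^sup>2 = (\<Sum>x\<in>A. (f x)\<^sup>2)"
  unfolding l2_def by (simp add: sum_nonneg)

lemma l2_insert: "finite A \<Longrightarrow> a \<notin> A \<Longrightarrow> l2 f (insert a A) = sqrt ((f a)\<^sup>2 + (l2 f A)\<^sup>2)"
  unfolding l2_def by (simp add: sum_nonneg)

lemma l2_le: "(\<Sum>x\<in>A. (f x)\<^sup>2) \<le> c\<^sup>2 \<Longrightarrow> 0 \<le> c \<Longrightarrow> l2 f A \<le> c"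
  unfolding l2_def by (simp add: real_sqrt_le_iff real_le_lsqrt sum_nonneg)

lemma l2_mult: "(\<Sum>i\<in>A. \<bar>f i\<bar> * \<bar>g i\<bar>) \<le> l2 f A * l2 g A"
proof (induction A rule: infinite_finite_induct)
  case (infinite A)
  then show ?case by (simp add: l2_def)
next
  case empty
  then show ?case by (simp add: l2_def)
next
  case (insert a A)
  have "(\<bar>f a\<bar> * \<bar>g a\<bar> + (\<Sum>i\<in>A. \<bar>f i\<bar> * \<bar>g i\<bar>))\<^sup>2
      \<le> (\<bar>f a\<bar> * \<bar>g a\<bar> + l2 f A * l2 g A)\<^sup>2"
    using insert.IH by (intro power_mono add_left_mono) (auto intro!: sum_nonneg add_nonneg_nonneg)
  also have "\<dots> \<le> ((f a)\<^sup>2 + (l2 f A)\<^sup>2) * ((g a)\<^sup>2 + (l2 g A)\<^sup>2)"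
    using L2_set_mult_ineq_lemma [of "l2 f A" "l2 g A" "\<bar>f a\<bar>" "\<bar>g a\<bar>"]
    by (simp add: power2_eq_square algebra_simps)
  also have "\<dots> = (sqrt ((f a)\<^sup>2 + (l2 f A)\<^sup>2) * sqrt ((g a)\<^sup>2 + (l2 g A)\<^sup>2))\<^sup>2"
    by (simp add: power_mult_distrib)
  finally have "(\<bar>f a\<bar> * \<bar>g a\<bar> + (\<Sum>i\<in>A. \<bar>f i\<bar> * \<bar>g i\<bar>))\<^sup>2
      \<le> (sqrt ((f a)\<^sup>2 + (l2 f A)\<^sup>2) * sqrt ((g a)\<^sup>2 + (l2 g A)\<^sup>2))\<^sup>2" .
  then have "\<bar>f a\<bar> * \<bar>g a\<bar> + (\<Sum>i\<in>A. \<bar>f i\<bar> * \<bar>g i\<bar>)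
      \<le> sqrt ((f a)\<^sup>2 + (l2 f A)\<^sup>2) * sqrt ((g a)\<^sup>2 + (l2 g A)\<^sup>2)"
    by (rule power2_le_imp_le) simp
  then show ?case using insert.hyps by (simp add: l2_insert)
qed

lemma cs_sq:
  fixes a b :: "'a \<Rightarrow> real"
  shows "(\<Sum>i\<in>A. a i * b i)\<^sup>2 \<le> (\<Sum>i\<in>A. (a i)\<^sup>2) * (\<Sum>i\<in>A. (b i)\<^sup>2)"
proof -
  have "\<bar>\<Sum>i\<in>A. a i * b i\<bar> \<le> (\<Sum>i\<in>A. \<bar>a i\<bar> * \<bar>b i\<bar>)"
    by (metis (no_types, lifting) abs_mult sum.cong sum_abs)
  also have "\<dots> \<le> l2 a A * l2 b A" by (rule l2_mult)
  finally have "\<bar>\<Sum>i\<in>A. a i * b i\<bar>\<^sup>2 \<le> (l2 a A * l2 b A)\<^sup>2"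
    by (intro power_mono) auto
  then show ?thesis by (simp add: power_mult_distrib l2_sq)
qed

lemma l2_triangle: "l2 (\<lambda>x. f x + g x) A \<le> l2 f A + l2 g A"
proof (induction A rule: infinite_finite_induct)
  case (infinite A)
  then show ?case by (simp add: l2_def)
next
  case empty
  then show ?case by (simp add: l2_def)
next
  case (insert x F)
  have "sqrt ((f x + g x)\<^sup>2 + (l2 (\<lambda>x. f x + g x) F)\<^sup>2) \<le>
        sqrt ((f x + g x)\<^sup>2 + (l2 f F + l2 g F)\<^sup>2)"
    by (intro real_sqrt_le_mono add_left_mono power_mono insert l2_nonneg)
  also have "\<dots> \<le> sqrt ((f x)\<^sup>2 + (l2 f F)\<^sup>2) + sqrt ((g x)\<^sup>2 + (l2 g F)\<^sup>2)"
    by (rule real_sqrt_sum_squares_triangle_ineq)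
  finally show ?case using insert.hyps by (simp add: l2_insert)
qed

lemma l2_sum:
  assumes "finite K"
  shows "l2 (\<lambda>x. \<Sum>k\<in>K. f k x) A \<le> (\<Sum>k\<in>K. l2 (f k) A)"
  using assms
proof (induction K rule: finite_induct)
  case empty
  then show ?case by (simp add: l2_def)
next
  case (insert k K)
  have "l2 (\<lambda>x. \<Sum>k\<in>insert k K. f k x) A = l2 (\<lambda>x. f k x + (\<Sum>k\<in>K. f k x)) A"
    using insert.hyps by simp
  also have "\<dots> \<le> l2 (f k) A + l2 (\<lambda>x. \<Sum>k\<in>K. f k x) A" by (rule l2_triangle)
  also have "\<dots> \<le> l2 (f k) A + (\<Sum>k\<in>K. l2 (f k) A)" using insert.IH by simp
  finally show ?case using insert.hyps by simp
qed

lemma l2_cong: "(\<And>x. x \<in> A \<Longrightarrow> f x = g x) \<Longrightarrow> l2 f A = l2 g A"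
  unfolding l2_def by simp


lemma sum_prod_le:
  fixes x :: "'c \<Rightarrow> 'b \<Rightarrow> real"
  assumes "finite C" "C \<noteq> {}" "finite I" "\<And>c r. 0 \<le> x c r"
  shows "(\<Sum>r\<in>I. \<Prod>c\<in>C. x c r) \<le> (\<Prod>c\<in>C. \<Sum>r\<in>I. x c r)"
  using assms(1,2)
proof (induction C rule: finite_ne_induct)
  case (singleton a)
  then show ?case by simp
next
  case (insert a C)
  have "(\<Sum>r\<in>I. \<Prod>c\<in>insert a C. x c r) = (\<Sum>r\<in>I. x a r * (\<Prod>c\<in>C. x c r))"
    using insert.hyps by simp
  also have "\<dots> \<le> (\<Sum>r\<in>I. x a r * (\<Sum>s\<in>I. \<Prod>c\<in>C. x c s))"
  proof (rule sum_mono)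
    fix r assume "r \<in> I"
    have "(\<Prod>c\<in>C. x c r) \<le> (\<Sum>s\<in>I. \<Prod>c\<in>C. x c s)"
      using \<open>r \<in> I\<close> assms(3,4) by (intro member_le_sum) (auto intro: prod_nonneg)
    then show "x a r * (\<Prod>c\<in>C. x c r) \<le> x a r * (\<Sum>s\<in>I. \<Prod>c\<in>C. x c s)"
      using assms(4) by (intro mult_left_mono) auto
  qed
  also have "\<dots> = (\<Sum>r\<in>I. x a r) * (\<Sum>s\<in>I. \<Prod>c\<in>C. x c s)"
    by (simp add: sum_distrib_right)
  also have "\<dots> \<le> (\<Sum>r\<in>I. x a r) * (\<Prod>c\<in>C. \<Sum>r\<in>I. x c r)"
    using insert.IH assms(4) by (intro mult_left_mono) (auto intro: sum_nonneg)
  also have "\<dots> = (\<Prod>c\<in>insert a C. \<Sum>r\<in>I. x c r)" using insert.hyps by simp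
  finally show ?case .
qed

locale ht = mtree +
  fixes D :: "nat \<Rightarrow> nat" and R :: "nat set \<Rightarrow> nat" and W :: "nat set \<Rightarrow> nat \<Rightarrow> nat \<Rightarrow> real"
    and B :: real
  assumes Bge: "\<forall>\<nu>\<in>T. wnorm N T D R W \<nu> \<le> B"
begin

definition ns :: "nat set \<Rightarrow> ((nat \<Rightarrow> nat) \<Rightarrow> real) \<Rightarrow> real" where
  "ns A f = (\<Sum>d\<in>box D A. (f d)\<^sup>2)"

definition SS :: "(nat set \<Rightarrow> nat) \<Rightarrow> nat set \<Rightarrow> real" where
  "SS Q \<nu> = (\<Sum>r<prk N T D R \<nu>. ns \<nu> (comp T D Q W \<nu> r))"

lemma ns_nonneg: "0 \<le> ns A f" unfolding ns_def by (simp add: sum_nonneg)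

lemma B0: "0 \<le> B"
proof -
  have "0 \<le> wnorm N T D R W {1..N}" unfolding wnorm_def by (simp add: sum_nonneg)
  then show ?thesis using Bge root_T by fastforce
qed

lemma rk_int: "\<nu> \<in> interior T \<Longrightarrow> rk T D R \<nu> = R \<nu>" unfolding rk_def by simp
lemma rk_leaf: "rk T D R {n} = D n" unfolding rk_def using single_not_int by simp

lemma prk_child:
  assumes "\<nu> \<in> interior T" "c \<in> children T \<nu>"
  shows "prk N T D R c = R \<nu>"
proof -
  have "c \<noteq> {1..N}" using ch_T[OF assms(2)] T_sub[OF int_T[OF assms(1)]] by blast
  moreover have "parent T c = \<nu>" using parent_eq[OF int_T[OF assms(1)] assms(2)] .
  ultimately show ?thesis unfolding prk_def using rk_int[OF assms(1)] by simp
qed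

lemma wnorm_sq: "(wnorm N T D R W \<nu>)\<^sup>2 = (\<Sum>r<prk N T D R \<nu>. (colnorm N T D R W \<nu> r)\<^sup>2)"
  unfolding wnorm_def colnorm_def by (simp add: sum_nonneg sum.swap[of _ "{..<rk T D R \<nu>}"])

lemma colnorm_nonneg: "0 \<le> colnorm N T D R W \<nu> r" unfolding colnorm_def by (simp add: sum_nonneg)
lemma rownorm_nonneg: "0 \<le> rownorm N T D R W \<nu> r" unfolding rownorm_def by (simp add: sum_nonneg)
lemma wnorm_nonneg: "0 \<le> wnorm N T D R W \<nu>" unfolding wnorm_def by (simp add: sum_nonneg)

lemma colnorm_sq: "(colnorm N T D R W \<nu> r)\<^sup>2 = (\<Sum>i<rk T D R \<nu>. (W \<nu> i r)\<^sup>2)"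
  unfolding colnorm_def by (simp add: sum_nonneg)

lemma SS_from_col:
  assumes "\<nu> \<in> T" "1 \<le> s"
    and "\<And>r. ns \<nu> (comp T D Q W \<nu> r) \<le> (colnorm N T D R W \<nu> r * B ^ (s - 1))\<^sup>2"
  shows "SS Q \<nu> \<le> (B ^ s)\<^sup>2"
proof -
  have "SS Q \<nu> \<le> (\<Sum>r<prk N T D R \<nu>. (colnorm N T D R W \<nu> r * B ^ (s - 1))\<^sup>2)"
    unfolding SS_def by (intro sum_mono assms(3))
  also have "\<dots> = (wnorm N T D R W \<nu>)\<^sup>2 * (B ^ (s - 1))\<^sup>2"
    by (simp add: wnorm_sq power_mult_distrib sum_distrib_right)
  also have "\<dots> \<le> B\<^sup>2 * (B ^ (s - 1))\<^sup>2"
    using Bge assms(1) wnorm_nonneg by (intro mult_right_mono power_mono) auto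
  also have "\<dots> = (B ^ s)\<^sup>2" using assms(2)
    by (metis (no_types, lifting) Suc_diff_le diff_Suc_1 power2_eq_square power_Suc power_mult_distrib)
  finally show ?thesis .
qed

lemma ns_prod:
  assumes "\<nu> \<in> interior T"
    and that: "\<And>c d d'. c \<in> children T \<nu> \<Longrightarrow> \<forall>i\<in>c. d i = d' i \<Longrightarrow> f c d = f c d'"
  shows "ns \<nu> (\<lambda>d. \<Prod>c\<in>children T \<nu>. f c d) = (\<Prod>c\<in>children T \<nu>. ns c (f c))"
proof -
  have nT: "\<nu> \<in> T" using int_T assms by blast
  have U: "\<Union>(children T \<nu>) = \<nu>" using union_ch[OF nT] int_iff[OF nT] assms by blast
  have "ns \<nu> (\<lambda>d. \<Prod>c\<in>children T \<nu>. f c d) = (\<Sum>d\<in>box D (\<Union>(children T \<nu>)). \<Prod>c\<in>children T \<nu>. (f c d)\<^sup>2)"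
    unfolding ns_def U by (simp add: prod_power_distrib)
  also have "\<dots> = (\<Prod>c\<in>children T \<nu>. \<Sum>d\<in>box D c. (f c d)\<^sup>2)"
  proof (rule box_prod)
    show "finite (children T \<nu>)" by (rule ch_fin)
    show "\<forall>c\<in>children T \<nu>. finite c" using ch_T T_fin by blast
    show "\<forall>c1\<in>children T \<nu>. \<forall>c2\<in>children T \<nu>. c1 \<noteq> c2 \<longrightarrow> c1 \<inter> c2 = {}" using ch_disj by blast
    show "\<forall>c\<in>children T \<nu>. \<forall>d d'. (\<forall>i\<in>c. d i = d' i) \<longrightarrow> (f c d)\<^sup>2 = (f c d')\<^sup>2"
      using that by metis
  qed
  finally show ?thesis unfolding ns_def .
qed

lemma ns_leaf: "n \<in> {1..N} \<Longrightarrow> ns {n} (comp T D Q W {n} r) = (colnorm N T D R W {n} r)\<^sup>2"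
  unfolding ns_def colnorm_sq rk_leaf comp_leaf by (rule box_single)

lemma colbound:
  assumes Q: "\<forall>\<mu>\<in>interior T. Q \<mu> \<le> R \<mu>" and "\<nu> \<in> T"
  shows "ns \<nu> (comp T D Q W \<nu> r) \<le> (colnorm N T D R W \<nu> r * B ^ (card (sub \<nu>) - 1))\<^sup>2"
  using assms(2)
proof (induction "card \<nu>" arbitrary: \<nu> r rule: less_induct)
  case less
  show ?case
  proof (cases "\<nu> \<in> interior T")
    case False
    then obtain n where n: "n \<in> {1..N}" "\<nu> = {n}" using leaf less.prems by blast
    then have "card (sub \<nu>) = 1" using sub_leaf single_T by simp
    then show ?thesis using ns_leaf n by simp
  next
    case True
    let ?C = "children T \<nu>"
    let ?P = "\<lambda>r' d. \<Prod>c\<in>?C. comp T D Q W c r' d"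
    have SSc: "SS Q c \<le> (B ^ card (sub c))\<^sup>2" if "c \<in> ?C" for c
    proof (rule SS_from_col)
      show cT: "c \<in> T" using ch_T that by blast
      show "1 \<le> card (sub c)" using card_sub_ge1 cT by blast
      show "ns c (comp T D Q W c r) \<le> (colnorm N T D R W c r * B ^ (card (sub c) - 1))\<^sup>2" for r
        using less.hyps[of c r] cT ch_card[OF less.prems that] by blast
    qed
    have QR: "Q \<nu> \<le> R \<nu>" using Q True by blast
    have pw: "(comp T D Q W \<nu> r d)\<^sup>2 \<le> (colnorm N T D R W \<nu> r)\<^sup>2 * (\<Sum>r'<R \<nu>. (?P r' d)\<^sup>2)" for d
    proof -
      have "(comp T D Q W \<nu> r d)\<^sup>2 = (\<Sum>r'<Q \<nu>. W \<nu> r' r * ?P r' d)\<^sup>2"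
        using comp_int[OF True] by simp
      also have "\<dots> \<le> (\<Sum>r'<Q \<nu>. (W \<nu> r' r)\<^sup>2) * (\<Sum>r'<Q \<nu>. (?P r' d)\<^sup>2)" by (rule cs_sq)
      also have "\<dots> \<le> (\<Sum>r'<R \<nu>. (W \<nu> r' r)\<^sup>2) * (\<Sum>r'<R \<nu>. (?P r' d)\<^sup>2)"
        using QR by (intro mult_mono sum_mono2) (auto intro: sum_nonneg)
      finally show ?thesis by (simp add: colnorm_sq rk_int[OF True])
    qed
    have "ns \<nu> (comp T D Q W \<nu> r) \<le> (\<Sum>d\<in>box D \<nu>. (colnorm N T D R W \<nu> r)\<^sup>2 * (\<Sum>r'<R \<nu>. (?P r' d)\<^sup>2))"
      unfolding ns_def by (intro sum_mono pw)
    also have "\<dots> = (colnorm N T D R W \<nu> r)\<^sup>2 * (\<Sum>r'<R \<nu>. ns \<nu> (?P r'))"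
      unfolding ns_def by (simp add: sum_distrib_left sum.swap[of _ "box D \<nu>"])
    also have "(\<Sum>r'<R \<nu>. ns \<nu> (?P r')) = (\<Sum>r'<R \<nu>. \<Prod>c\<in>?C. ns c (comp T D Q W c r'))"
    proof (rule sum.cong[OF refl])
      fix r' show "ns \<nu> (?P r') = (\<Prod>c\<in>?C. ns c (comp T D Q W c r'))"
        by (rule ns_prod[OF True]) (use ch_T comp_local in blast)
    qed
    also have "\<dots> \<le> (\<Prod>c\<in>?C. \<Sum>r'<R \<nu>. ns c (comp T D Q W c r'))"
      using True unfolding interior_def by (intro sum_prod_le) (auto simp: ch_fin ns_nonneg)
    also have "\<dots> = (\<Prod>c\<in>?C. SS Q c)"
      unfolding SS_def using prk_child[OF True] by simp
    also have "\<dots> \<le> (\<Prod>c\<in>?C. (B ^ card (sub c))\<^sup>2)"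
      using SSc by (intro prod_mono) (auto simp: SS_def ns_nonneg sum_nonneg)
    also have "\<dots> = (B ^ (card (sub \<nu>) - 1))\<^sup>2"
      using card_sub[OF True] by (simp add: power_sum prod_power_distrib)
    finally show ?thesis
      by (simp add: power_mult_distrib mult_left_mono)
  qed
qed

lemma SSbound:
  assumes Q: "\<forall>\<mu>\<in>interior T. Q \<mu> \<le> R \<mu>" and "\<nu> \<in> T"
  shows "SS Q \<nu> \<le> (B ^ card (sub \<nu>))\<^sup>2"
  using SS_from_col[OF assms(2) card_sub_ge1[OF assms(2)] colbound[OF Q assms(2)]] .

end


lemma sqrt_prod: "sqrt (\<Prod>c\<in>C. f c) = (\<Prod>c\<in>C. sqrt (f c))"
  by (induction C rule: infinite_finite_induct) (auto simp: real_sqrt_mult)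

lemma l2_pair_sq: "(l2 (\<lambda>(r,d). f r d) (I \<times> A))\<^sup>2 = (\<Sum>r\<in>I. \<Sum>d\<in>A. (f r d)\<^sup>2)"
proof -
  have e1: "(\<Sum>x\<in>I \<times> A. ((\<lambda>(r,d). f r d) x)\<^sup>2) = (\<Sum>x\<in>I \<times> A. (\<lambda>(r,d). (f r d)\<^sup>2) x)"
    by (rule sum.cong) auto
  show ?thesis
  proof (cases "finite I \<and> finite A")
    case True
    have "(\<Sum>x\<in>I \<times> A. (\<lambda>(r,d). (f r d)\<^sup>2) x) = (\<Sum>r\<in>I. \<Sum>d\<in>A. (f r d)\<^sup>2)"
      by (rule sum.cartesian_product[symmetric])
    then show ?thesis unfolding l2_sq e1 .
  next
    case False
    have r0: "(\<Sum>r\<in>I. \<Sum>d\<in>A. (f r d)\<^sup>2) = 0"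
    proof (cases "finite I")
      case True
      then have "infinite A" using False by blast
      then show ?thesis by simp
    next
      case False
      then show ?thesis by simp
    qed
    have "(\<Sum>x\<in>I \<times> A. ((\<lambda>(r,d). f r d) x)\<^sup>2) = 0"
    proof (cases "I = {} \<or> A = {}")
      case True
      then have "I \<times> A = {}" by blast
      then show ?thesis by (simp only: sum.empty)
    next
      case ne: False
      then have "infinite (I \<times> A)" using False by (simp add: finite_cartesian_product_iff)
      then show ?thesis by (rule sum.infinite)
    qed
    then show ?thesis unfolding l2_sq r0 .
  qed
qed

lemma l2_pair_le:
  assumes "(\<Sum>r\<in>I. \<Sum>d\<in>A. (f r d)\<^sup>2) \<le> c\<^sup>2" "0 \<le> c"
  shows "l2 (\<lambda>(r,d). f r d) (I \<times> A) \<le> c"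
proof -
  have "(l2 (\<lambda>(r,d). f r d) (I \<times> A))\<^sup>2 \<le> c\<^sup>2" using assms(1) by (simp only: l2_pair_sq)
  then show ?thesis using assms(2) by (rule power2_le_imp_le)
qed

lemma l2_pair_mult:
  assumes "finite I" "finite A"
  shows "l2 (\<lambda>(r,d). a r * b d) (I \<times> A) = l2 a I * l2 b A"
proof -
  have "(l2 (\<lambda>(r,d). a r * b d) (I \<times> A))\<^sup>2 = (\<Sum>r\<in>I. \<Sum>d\<in>A. (a r * b d)\<^sup>2)" by (rule l2_pair_sq)
  also have "\<dots> = (l2 a I * l2 b A)\<^sup>2"
    by (simp add: power_mult_distrib l2_sq sum_product)
  finally have eq: "(l2 (\<lambda>(r,d). a r * b d) (I \<times> A))\<^sup>2 = (l2 a I * l2 b A)\<^sup>2" .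
  show ?thesis by (rule power2_eq_imp_eq[OF eq l2_nonneg]) (simp add: l2_nonneg)
qed

lemma l2_pair_cs:
  fixes w :: "nat \<Rightarrow> 'b \<Rightarrow> real" and G :: "nat \<Rightarrow> 'a \<Rightarrow> real"
  assumes "finite K"
  shows "l2 (\<lambda>(r,d). \<Sum>k\<in>K. w k r * G k d) (I \<times> A)
     \<le> sqrt (\<Sum>r\<in>I. \<Sum>k\<in>K. (w k r)\<^sup>2) * l2 (\<lambda>(k,d). G k d) (K \<times> A)"
proof (rule l2_pair_le)
  show "0 \<le> sqrt (\<Sum>r\<in>I. \<Sum>k\<in>K. (w k r)\<^sup>2) * l2 (\<lambda>(k,d). G k d) (K \<times> A)"
    by (simp add: l2_nonneg sum_nonneg)
  have "(\<Sum>r\<in>I. \<Sum>d\<in>A. (\<Sum>k\<in>K. w k r * G k d)\<^sup>2)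
      \<le> (\<Sum>r\<in>I. \<Sum>d\<in>A. (\<Sum>k\<in>K. (w k r)\<^sup>2) * (\<Sum>k\<in>K. (G k d)\<^sup>2))"
    by (intro sum_mono cs_sq)
  also have "\<dots> = (\<Sum>r\<in>I. \<Sum>k\<in>K. (w k r)\<^sup>2) * (\<Sum>k\<in>K. \<Sum>d\<in>A. (G k d)\<^sup>2)"
  proof -
    have "(\<Sum>d\<in>A. \<Sum>k\<in>K. (G k d)\<^sup>2) = (\<Sum>k\<in>K. \<Sum>d\<in>A. (G k d)\<^sup>2)" by (rule sum.swap)
    moreover have "(\<Sum>r\<in>I. \<Sum>d\<in>A. (\<Sum>k\<in>K. (w k r)\<^sup>2) * (\<Sum>k\<in>K. (G k d)\<^sup>2))
       = (\<Sum>r\<in>I. \<Sum>k\<in>K. (w k r)\<^sup>2) * (\<Sum>d\<in>A. \<Sum>k\<in>K. (G k d)\<^sup>2)"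
      by (rule sum_product[symmetric])
    ultimately show ?thesis by simp
  qed
  also have "\<dots> = (sqrt (\<Sum>r\<in>I. \<Sum>k\<in>K. (w k r)\<^sup>2) * l2 (\<lambda>(k,d). G k d) (K \<times> A))\<^sup>2"
    by (simp add: power_mult_distrib l2_pair_sq sum_nonneg)
  finally show "(\<Sum>r\<in>I. \<Sum>d\<in>A. (\<Sum>k\<in>K. w k r * G k d)\<^sup>2)
      \<le> (sqrt (\<Sum>r\<in>I. \<Sum>k\<in>K. (w k r)\<^sup>2) * l2 (\<lambda>(k,d). G k d) (K \<times> A))\<^sup>2" .
qed

lemma l2_pair_mono:
  assumes "I \<subseteq> J" "finite J"
  shows "l2 (\<lambda>(r,d). f r d) (I \<times> A) \<le> l2 (\<lambda>(r,d). f r d) (J \<times> A)"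
proof (rule l2_pair_le)
  show "0 \<le> l2 (\<lambda>(r,d). f r d) (J \<times> A)" by (rule l2_nonneg)
  show "(\<Sum>r\<in>I. \<Sum>d\<in>A. (f r d)\<^sup>2) \<le> (l2 (\<lambda>(r,d). f r d) (J \<times> A))\<^sup>2"
    unfolding l2_pair_sq using assms by (intro sum_mono2) (auto intro: sum_nonneg)
qed


context ht begin

lemma tele:
  fixes a b :: "nat set \<Rightarrow> nat \<Rightarrow> (nat \<Rightarrow> nat) \<Rightarrow> real"
  assumes "finite C" "\<forall>c\<in>C. finite c" "\<forall>c1\<in>C. \<forall>c2\<in>C. c1 \<noteq> c2 \<longrightarrow> c1 \<inter> c2 = {}"
    and la: "\<forall>c\<in>C. \<forall>r d d'. (\<forall>i\<in>c. d i = d' i) \<longrightarrow> a c r d = a c r d'"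
    and lb: "\<forall>c\<in>C. \<forall>r d d'. (\<forall>i\<in>c. d i = d' i) \<longrightarrow> b c r d = b c r d'"
    and I: "finite I"
    and M: "\<forall>c\<in>C. 0 \<le> M c \<and> (\<forall>r\<in>I. ns c (a c r) \<le> (M c)\<^sup>2 \<and> ns c (b c r) \<le> (M c)\<^sup>2)"
    and E: "\<forall>c\<in>C. l2 (\<lambda>(r,d). a c r d - b c r d) (I \<times> box D c) \<le> Ec c"
  shows "l2 (\<lambda>(r,d). (\<Prod>c\<in>C. a c r d) - (\<Prod>c\<in>C. b c r d)) (I \<times> box D (\<Union>C))
          \<le> (\<Sum>c\<in>C. Ec c * (\<Prod>c'\<in>C - {c}. M c'))"
  using assms(1-5) M E
proof (induction C rule: finite_induct)
  case empty
  show ?case by (simp add: l2_def)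
next
  case (insert x S)
  have fx: "finite x" and fS: "\<forall>c\<in>S. finite c" using insert.prems(1) by auto
  have dS: "\<forall>c1\<in>S. \<forall>c2\<in>S. c1 \<noteq> c2 \<longrightarrow> c1 \<inter> c2 = {}" using insert.prems(2) by blast
  have laS: "\<forall>c\<in>S. \<forall>r d d'. (\<forall>i\<in>c. d i = d' i) \<longrightarrow> a c r d = a c r d'" using insert.prems(3) by blast
  have lbS: "\<forall>c\<in>S. \<forall>r d d'. (\<forall>i\<in>c. d i = d' i) \<longrightarrow> b c r d = b c r d'" using insert.prems(4) by blast
  have MS: "\<forall>c\<in>S. 0 \<le> M c \<and> (\<forall>r\<in>I. ns c (a c r) \<le> (M c)\<^sup>2 \<and> ns c (b c r) \<le> (M c)\<^sup>2)"
    using insert.prems(5) by blast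
  have ES: "\<forall>c\<in>S. l2 (\<lambda>(r,d). a c r d - b c r d) (I \<times> box D c) \<le> Ec c" using insert.prems(6) by blast
  have Mx: "0 \<le> M x" "\<forall>r\<in>I. ns x (a x r) \<le> (M x)\<^sup>2" using insert.prems(5) by auto
  have Ex: "l2 (\<lambda>(r,d). a x r d - b x r d) (I \<times> box D x) \<le> Ec x" using insert.prems(6) by blast
  have IH: "l2 (\<lambda>(r,d). (\<Prod>c\<in>S. a c r d) - (\<Prod>c\<in>S. b c r d)) (I \<times> box D (\<Union>S))
          \<le> (\<Sum>c\<in>S. Ec c * (\<Prod>c'\<in>S - {c}. M c'))"
    using insert.IH[OF fS dS laS lbS MS ES] .
  have disj: "x \<inter> \<Union> S = {}"
  proof -
    have "x \<inter> c = {}" if "c \<in> S" for c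
    proof -
      have "x \<noteq> c" using that insert.hyps(2) by blast
      moreover have "x \<in> insert x S" "c \<in> insert x S" using that by auto
      ultimately show ?thesis using insert.prems(2) by blast
    qed
    then show ?thesis by blast
  qed
  have fU: "finite (\<Union>S)" by (rule finite_Union[OF insert.hyps(1)]) (use fS in simp)
  let ?AS = "\<lambda>r d. \<Prod>c\<in>S. a c r d" and ?BS = "\<lambda>r d. \<Prod>c\<in>S. b c r d"
  have locA: "\<forall>i\<in>\<Union>S. d i = d' i \<Longrightarrow> ?AS r d = ?AS r d'" for r d d'
  proof -
    assume h: "\<forall>i\<in>\<Union>S. d i = d' i"
    show ?thesis
    proof (rule prod.cong[OF refl])
      fix c assume c: "c \<in> S"
      have "\<forall>i\<in>c. d i = d' i" using h c by blast
      then show "a c r d = a c r d'" using laS[rule_format, OF c] by blast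
    qed
  qed
  have locBS: "\<forall>i\<in>\<Union>S. d i = d' i \<Longrightarrow> ?BS r d = ?BS r d'" for r d d'
  proof -
    assume h: "\<forall>i\<in>\<Union>S. d i = d' i"
    show ?thesis
    proof (rule prod.cong[OF refl])
      fix c assume c: "c \<in> S"
      have "\<forall>i\<in>c. d i = d' i" using h c by blast
      then show "b c r d = b c r d'" using lbS[rule_format, OF c] by blast
    qed
  qed
  have locAS: "\<forall>i\<in>\<Union>S. d i = d' i \<Longrightarrow> ?AS r d - ?BS r d = ?AS r d' - ?BS r d'" for r d d'
    using locA[of d d' r] locBS[of d d' r] by simp
  have lax: "\<forall>i\<in>x. d i = d' i \<Longrightarrow> a x r d = a x r d'" for r d d' using insert.prems(3) by blast
  have lbx: "\<forall>i\<in>x. d i = d' i \<Longrightarrow> b x r d = b x r d'" for r d d' using insert.prems(4) by blast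
  let ?U = "box D (x \<union> \<Union>S)"
  have split: "(\<lambda>(r,d). (\<Prod>c\<in>insert x S. a c r d) - (\<Prod>c\<in>insert x S. b c r d))
      = (\<lambda>p. (\<lambda>(r,d). a x r d * (?AS r d - ?BS r d)) p + (\<lambda>(r,d). (a x r d - b x r d) * ?BS r d) p)"
    using insert.hyps by (auto simp: algebra_simps)
  have "l2 (\<lambda>(r,d). (\<Prod>c\<in>insert x S. a c r d) - (\<Prod>c\<in>insert x S. b c r d)) (I \<times> box D (\<Union>(insert x S)))
      \<le> l2 (\<lambda>(r,d). a x r d * (?AS r d - ?BS r d)) (I \<times> ?U)
        + l2 (\<lambda>(r,d). (a x r d - b x r d) * ?BS r d) (I \<times> ?U)"
    unfolding split by (simp add: l2_triangle)
  also have "l2 (\<lambda>(r,d). a x r d * (?AS r d - ?BS r d)) (I \<times> ?U)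
      \<le> M x * (\<Sum>c\<in>S. Ec c * (\<Prod>c'\<in>S - {c}. M c'))"
  proof (rule l2_pair_le)
    have s0: "(\<Sum>d\<in>?U. (a x r d * (?AS r d - ?BS r d))\<^sup>2)
        = ns x (a x r) * (\<Sum>d\<in>box D (\<Union>S). (?AS r d - ?BS r d)\<^sup>2)" for r
      unfolding ns_def power_mult_distrib
    proof (rule box_split[OF disj fx fU])
      fix d d' :: "nat \<Rightarrow> nat" assume h: "\<forall>i\<in>x. d i = d' i"
      show "(a x r d)\<^sup>2 = (a x r d')\<^sup>2" using lax[OF h] by simp
    next
      fix d d' :: "nat \<Rightarrow> nat" assume h: "\<forall>i\<in>\<Union>S. d i = d' i"
      show "(?AS r d - ?BS r d)\<^sup>2 = (?AS r d' - ?BS r d')\<^sup>2" using locAS[OF h] by simp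
    qed
    have "(\<Sum>r\<in>I. \<Sum>d\<in>?U. (a x r d * (?AS r d - ?BS r d))\<^sup>2)
        \<le> (\<Sum>r\<in>I. (M x)\<^sup>2 * (\<Sum>d\<in>box D (\<Union>S). (?AS r d - ?BS r d)\<^sup>2))"
      unfolding s0 using Mx by (intro sum_mono mult_right_mono) (auto intro: sum_nonneg)
    also have "\<dots> = (M x)\<^sup>2 * (l2 (\<lambda>(r,d). ?AS r d - ?BS r d) (I \<times> box D (\<Union>S)))\<^sup>2"
      by (simp add: l2_pair_sq sum_distrib_left)
    also have "\<dots> \<le> (M x)\<^sup>2 * (\<Sum>c\<in>S. Ec c * (\<Prod>c'\<in>S - {c}. M c'))\<^sup>2"
      using IH l2_nonneg by (intro mult_left_mono power_mono) auto
    finally show "(\<Sum>r\<in>I. \<Sum>d\<in>?U. (a x r d * (?AS r d - ?BS r d))\<^sup>2)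
        \<le> (M x * (\<Sum>c\<in>S. Ec c * (\<Prod>c'\<in>S - {c}. M c')))\<^sup>2"
      by (simp add: power_mult_distrib)
    have "0 \<le> l2 (\<lambda>(r,d). ?AS r d - ?BS r d) (I \<times> box D (\<Union>S))" by (rule l2_nonneg)
    then show "0 \<le> M x * (\<Sum>c\<in>S. Ec c * (\<Prod>c'\<in>S - {c}. M c'))" using IH Mx by simp
  qed
  also have "l2 (\<lambda>(r,d). (a x r d - b x r d) * ?BS r d) (I \<times> ?U) \<le> Ec x * (\<Prod>c\<in>S. M c)"
  proof (rule l2_pair_le)
    have PM: "ns (\<Union>S) (?BS r) \<le> (\<Prod>c\<in>S. M c)\<^sup>2" if "r \<in> I" for r
    proof -
      have "ns (\<Union>S) (?BS r) = (\<Sum>d\<in>box D (\<Union>S). \<Prod>c\<in>S. (b c r d)\<^sup>2)"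
        unfolding ns_def by (simp add: prod_power_distrib)
      also have "\<dots> = (\<Prod>c\<in>S. \<Sum>d\<in>box D c. (b c r d)\<^sup>2)"
      proof (rule box_prod[OF insert.hyps(1) fS dS], intro ballI allI impI)
        fix c and d d' :: "nat \<Rightarrow> nat" assume c: "c \<in> S" and h: "\<forall>i\<in>c. d i = d' i"
        have "b c r d = b c r d'" using lbS[rule_format, OF c] h by blast
        then show "(b c r d)\<^sup>2 = (b c r d')\<^sup>2" by simp
      qed
      also have "\<dots> \<le> (\<Prod>c\<in>S. (M c)\<^sup>2)"
        using MS that unfolding ns_def by (intro prod_mono) (auto intro: sum_nonneg)
      finally show ?thesis by (simp add: prod_power_distrib)
    qed
    have s0: "(\<Sum>d\<in>?U. ((a x r d - b x r d) * ?BS r d)\<^sup>2)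
        = (\<Sum>d\<in>box D x. (a x r d - b x r d)\<^sup>2) * ns (\<Union>S) (?BS r)" for r
      unfolding ns_def power_mult_distrib
    proof (rule box_split[OF disj fx fU])
      fix d d' :: "nat \<Rightarrow> nat" assume h: "\<forall>i\<in>x. d i = d' i"
      show "(a x r d - b x r d)\<^sup>2 = (a x r d' - b x r d')\<^sup>2" using lax[OF h] lbx[OF h] by simp
    next
      fix d d' :: "nat \<Rightarrow> nat" assume h: "\<forall>i\<in>\<Union>S. d i = d' i"
      show "(?BS r d)\<^sup>2 = (?BS r d')\<^sup>2" using locBS[OF h] by simp
    qed
    have "(\<Sum>r\<in>I. \<Sum>d\<in>?U. ((a x r d - b x r d) * ?BS r d)\<^sup>2)
        \<le> (\<Sum>r\<in>I. (\<Sum>d\<in>box D x. (a x r d - b x r d)\<^sup>2) * (\<Prod>c\<in>S. M c)\<^sup>2)"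
      unfolding s0 using PM by (intro sum_mono mult_left_mono) (auto intro: sum_nonneg)
    also have "\<dots> = (l2 (\<lambda>(r,d). a x r d - b x r d) (I \<times> box D x))\<^sup>2 * (\<Prod>c\<in>S. M c)\<^sup>2"
      by (simp add: l2_pair_sq sum_distrib_right)
    also have "\<dots> \<le> (Ec x)\<^sup>2 * (\<Prod>c\<in>S. M c)\<^sup>2"
      using Ex l2_nonneg by (intro mult_right_mono power_mono) auto
    finally show "(\<Sum>r\<in>I. \<Sum>d\<in>?U. ((a x r d - b x r d) * ?BS r d)\<^sup>2) \<le> (Ec x * (\<Prod>c\<in>S. M c))\<^sup>2"
      by (simp add: power_mult_distrib)
    have "0 \<le> Ec x" using Ex l2_nonneg order_trans by blast
    then show "0 \<le> Ec x * (\<Prod>c\<in>S. M c)" using MS by (simp add: prod_nonneg)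
  qed
  also have "M x * (\<Sum>c\<in>S. Ec c * (\<Prod>c'\<in>S - {c}. M c')) + Ec x * (\<Prod>c\<in>S. M c)
      = (\<Sum>c\<in>insert x S. Ec c * (\<Prod>c'\<in>insert x S - {c}. M c'))"
  proof -
    have "(\<Sum>c\<in>S. Ec c * (\<Prod>c'\<in>insert x S - {c}. M c')) = (\<Sum>c\<in>S. M x * (Ec c * (\<Prod>c'\<in>S - {c}. M c')))"
    proof (rule sum.cong[OF refl])
      fix c assume "c \<in> S"
      then have "insert x S - {c} = insert x (S - {c})" using insert.hyps by auto
      then show "Ec c * (\<Prod>c'\<in>insert x S - {c}. M c') = M x * (Ec c * (\<Prod>c'\<in>S - {c}. M c'))"
        using insert.hyps by simp
    qed
    moreover have "insert x S - {x} = S" using insert.hyps by auto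
    ultimately show ?thesis using insert.hyps by (simp add: sum_distrib_left)
  qed
  finally show ?case by simp
qed

end


context ht begin

definition EE :: "(nat set \<Rightarrow> nat) \<Rightarrow> nat set \<Rightarrow> real" where
  "EE Q \<nu> = l2 (\<lambda>(r,d). comp T D R W \<nu> r d - comp T D Q W \<nu> r d) ({..<prk N T D R \<nu>} \<times> box D \<nu>)"

definition tailsum :: "(nat set \<Rightarrow> nat) \<Rightarrow> nat set \<Rightarrow> real" where
  "tailsum Q \<mu> = (\<Sum>r\<in>{Q \<mu>..<R \<mu>}. sigma N T D R W \<mu> r)"

lemma sigma_nonneg: "0 \<le> sigma N T D R W \<nu> r"
  unfolding sigma_def using rownorm_nonneg colnorm_nonneg by (simp add: prod_nonneg)

lemma diff_decomp:
  assumes "\<nu> \<in> interior T" "Q \<nu> \<le> R \<nu>"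
  shows "comp T D R W \<nu> r d - comp T D Q W \<nu> r d =
    (\<Sum>r'\<in>{Q \<nu>..<R \<nu>}. W \<nu> r' r * (\<Prod>c\<in>children T \<nu>. comp T D R W c r' d)) +
    (\<Sum>r'<Q \<nu>. W \<nu> r' r * ((\<Prod>c\<in>children T \<nu>. comp T D R W c r' d) - (\<Prod>c\<in>children T \<nu>. comp T D Q W c r' d)))"
proof -
  let ?PR = "\<lambda>r'. \<Prod>c\<in>children T \<nu>. comp T D R W c r' d"
  let ?PQ = "\<lambda>r'. \<Prod>c\<in>children T \<nu>. comp T D Q W c r' d"
  have U: "{..<R \<nu>} = {..<Q \<nu>} \<union> {Q \<nu>..<R \<nu>}" using assms(2) by auto
  have "comp T D R W \<nu> r d = (\<Sum>r'<Q \<nu>. W \<nu> r' r * ?PR r') + (\<Sum>r'\<in>{Q \<nu>..<R \<nu>}. W \<nu> r' r * ?PR r')"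
    unfolding comp_int[OF assms(1)] U by (rule sum.union_disjoint) auto
  moreover have "comp T D Q W \<nu> r d = (\<Sum>r'<Q \<nu>. W \<nu> r' r * ?PQ r')"
    by (rule comp_int[OF assms(1)])
  moreover have "(\<Sum>r'<Q \<nu>. W \<nu> r' r * ?PR r') - (\<Sum>r'<Q \<nu>. W \<nu> r' r * ?PQ r')
      = (\<Sum>r'<Q \<nu>. W \<nu> r' r * (?PR r' - ?PQ r'))"
    by (simp add: sum_subtractf right_diff_distrib)
  ultimately show ?thesis by simp
qed

lemma T1_bound:
  assumes "\<nu> \<in> interior T"
  shows "l2 (\<lambda>(r,d). \<Sum>r'\<in>{Q \<nu>..<R \<nu>}. W \<nu> r' r * (\<Prod>c\<in>children T \<nu>. comp T D R W c r' d))
            ({..<prk N T D R \<nu>} \<times> box D \<nu>)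
         \<le> tailsum Q \<nu> * B ^ (card (sub \<nu>) - 1 - card (children T \<nu>))"
proof -
  let ?C = "children T \<nu>"
  let ?PR = "\<lambda>r' d. \<Prod>c\<in>?C. comp T D R W c r' d"
  let ?A = "{..<prk N T D R \<nu>} \<times> box D \<nu>"
  let ?e = "card (sub \<nu>) - 1 - card ?C"
  have nT: "\<nu> \<in> T" using assms int_T by blast
  have fb: "finite (box D \<nu>)" using box_fin T_fin nT by blast
  have RR: "\<forall>\<mu>\<in>interior T. R \<mu> \<le> R \<mu>" by simp
  have ee: "(\<Sum>c\<in>?C. card (sub c) - 1) = ?e"
  proof -
    have "(\<Sum>c\<in>?C. card (sub c) - 1) = (\<Sum>c\<in>?C. card (sub c)) - (\<Sum>c\<in>?C. 1)"
      by (rule sum_subtractf_nat) (use card_sub_ge1 ch_T in blast)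
    then show ?thesis using card_sub[OF assms] by simp
  qed
  have each: "l2 (\<lambda>(r,d). W \<nu> r' r * ?PR r' d) ?A \<le> sigma N T D R W \<nu> r' * B ^ ?e" for r'
  proof -
    have "l2 (\<lambda>(r,d). W \<nu> r' r * ?PR r' d) ?A = l2 (\<lambda>r. W \<nu> r' r) {..<prk N T D R \<nu>} * l2 (?PR r') (box D \<nu>)"
      by (rule l2_pair_mult) (auto simp: fb)
    also have "l2 (\<lambda>r. W \<nu> r' r) {..<prk N T D R \<nu>} = rownorm N T D R W \<nu> r'"
      unfolding l2_def rownorm_def ..
    also have "l2 (?PR r') (box D \<nu>) = sqrt (ns \<nu> (?PR r'))" unfolding l2_def ns_def ..
    also have "ns \<nu> (?PR r') = (\<Prod>c\<in>?C. ns c (comp T D R W c r'))"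
    proof (rule ns_prod[OF assms])
      fix c and d d' :: "nat \<Rightarrow> nat" assume "c \<in> ?C" "\<forall>i\<in>c. d i = d' i"
      then show "comp T D R W c r' d = comp T D R W c r' d'" using comp_local ch_T by blast
    qed
    also have "sqrt (\<Prod>c\<in>?C. ns c (comp T D R W c r')) = (\<Prod>c\<in>?C. sqrt (ns c (comp T D R W c r')))"
      by (rule sqrt_prod)
    also have "\<dots> \<le> (\<Prod>c\<in>?C. colnorm N T D R W c r' * B ^ (card (sub c) - 1))"
    proof (rule prod_mono)
      fix c assume c: "c \<in> ?C"
      then have cT: "c \<in> T" using ch_T by blast
      have "sqrt (ns c (comp T D R W c r')) \<le> sqrt ((colnorm N T D R W c r' * B ^ (card (sub c) - 1))\<^sup>2)"
        using colbound[OF RR cT] by (rule real_sqrt_le_mono)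
      also have "\<dots> = colnorm N T D R W c r' * B ^ (card (sub c) - 1)"
        using colnorm_nonneg B0 by simp
      finally show "0 \<le> sqrt (ns c (comp T D R W c r')) \<and>
          sqrt (ns c (comp T D R W c r')) \<le> colnorm N T D R W c r' * B ^ (card (sub c) - 1)"
        using ns_nonneg by simp
    qed
    also have "\<dots> = (\<Prod>c\<in>?C. colnorm N T D R W c r') * (\<Prod>c\<in>?C. B ^ (card (sub c) - 1))"
      by (rule prod.distrib)
    also have "(\<Prod>c\<in>?C. B ^ (card (sub c) - 1)) = B ^ (\<Sum>c\<in>?C. card (sub c) - 1)"
      by (rule power_sum[symmetric])
    also have "\<dots> = B ^ ?e" unfolding ee ..
    finally have "l2 (\<lambda>(r,d). W \<nu> r' r * ?PR r' d) ?A
        \<le> rownorm N T D R W \<nu> r' * ((\<Prod>c\<in>?C. colnorm N T D R W c r') * B ^ ?e)"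
      using rownorm_nonneg by (simp add: mult_left_mono)
    then show ?thesis unfolding sigma_def by (simp add: mult.assoc)
  qed
  have "l2 (\<lambda>(r,d). \<Sum>r'\<in>{Q \<nu>..<R \<nu>}. W \<nu> r' r * ?PR r' d) ?A
      = l2 (\<lambda>x. \<Sum>r'\<in>{Q \<nu>..<R \<nu>}. (\<lambda>(r,d). W \<nu> r' r * ?PR r' d) x) ?A"
    by (rule l2_cong) auto
  also have "\<dots> \<le> (\<Sum>r'\<in>{Q \<nu>..<R \<nu>}. l2 (\<lambda>(r,d). W \<nu> r' r * ?PR r' d) ?A)"
    by (rule l2_sum) simp
  also have "\<dots> \<le> (\<Sum>r'\<in>{Q \<nu>..<R \<nu>}. sigma N T D R W \<nu> r' * B ^ ?e)"
    by (rule sum_mono) (rule each)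
  also have "\<dots> = tailsum Q \<nu> * B ^ ?e" unfolding tailsum_def by (simp add: sum_distrib_right)
  finally show ?thesis .
qed


lemma T2_bound:
  assumes Q: "\<forall>\<mu>\<in>interior T. Q \<mu> \<le> R \<mu>" and int: "\<nu> \<in> interior T"
  shows "l2 (\<lambda>(r,d). \<Sum>r'<Q \<nu>. W \<nu> r' r * ((\<Prod>c\<in>children T \<nu>. comp T D R W c r' d) - (\<Prod>c\<in>children T \<nu>. comp T D Q W c r' d)))
            ({..<prk N T D R \<nu>} \<times> box D \<nu>)
         \<le> (\<Sum>c\<in>children T \<nu>. EE Q c * B ^ (card (sub \<nu>) - card (sub c)))"
proof -
  let ?C = "children T \<nu>"
  let ?G = "\<lambda>r' d. (\<Prod>c\<in>?C. comp T D R W c r' d) - (\<Prod>c\<in>?C. comp T D Q W c r' d)"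
  let ?P = "prk N T D R \<nu>"
  have nT: "\<nu> \<in> T" using int int_T by blast
  have QR: "Q \<nu> \<le> R \<nu>" using Q int by blast
  have RR: "\<forall>\<mu>\<in>interior T. R \<mu> \<le> R \<mu>" by simp
  have U: "\<Union>?C = \<nu>" using union_ch[OF nT] int_iff[OF nT] int by blast
  have "l2 (\<lambda>(r,d). \<Sum>r'<Q \<nu>. W \<nu> r' r * ?G r' d) ({..<?P} \<times> box D \<nu>)
      \<le> sqrt (\<Sum>r<?P. \<Sum>r'<Q \<nu>. (W \<nu> r' r)\<^sup>2) * l2 (\<lambda>(k,d). ?G k d) ({..<Q \<nu>} \<times> box D \<nu>)"
    by (rule l2_pair_cs[where w="\<lambda>k r. W \<nu> k r" and G="?G" and K="{..<Q \<nu>}"]) simp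
  also have "\<dots> \<le> B * l2 (\<lambda>(k,d). ?G k d) ({..<R \<nu>} \<times> box D \<nu>)"
  proof (rule mult_mono)
    have "(\<Sum>r<?P. \<Sum>r'<Q \<nu>. (W \<nu> r' r)\<^sup>2) \<le> (\<Sum>r<?P. \<Sum>r'<R \<nu>. (W \<nu> r' r)\<^sup>2)"
      using QR by (intro sum_mono sum_mono2) auto
    also have "\<dots> = (wnorm N T D R W \<nu>)\<^sup>2"
      unfolding wnorm_def rk_int[OF int] by (simp add: sum_nonneg sum.swap[of _ "{..<?P}"])
    also have "\<dots> \<le> B\<^sup>2" using Bge nT wnorm_nonneg by (intro power_mono) auto
    finally show "sqrt (\<Sum>r<?P. \<Sum>r'<Q \<nu>. (W \<nu> r' r)\<^sup>2) \<le> B"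
      using B0 by (simp add: real_sqrt_le_iff real_le_lsqrt sum_nonneg real_sqrt_le_mono
        real_sqrt_abs[symmetric] del: real_sqrt_abs)
    show "l2 (\<lambda>(k,d). ?G k d) ({..<Q \<nu>} \<times> box D \<nu>) \<le> l2 (\<lambda>(k,d). ?G k d) ({..<R \<nu>} \<times> box D \<nu>)"
      using QR by (intro l2_pair_mono) auto
  qed (use B0 l2_nonneg in auto)
  also have "l2 (\<lambda>(k,d). ?G k d) ({..<R \<nu>} \<times> box D \<nu>) = l2 (\<lambda>(k,d). ?G k d) ({..<R \<nu>} \<times> box D (\<Union>?C))"
    by (simp only: U)
  also have "\<dots> \<le> (\<Sum>c\<in>?C. EE Q c * (\<Prod>c'\<in>?C - {c}. B ^ card (sub c')))"
  proof (rule tele)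
    show "finite ?C" by (rule ch_fin)
    show "\<forall>c\<in>?C. finite c" using ch_T T_fin by blast
    show "\<forall>c1\<in>?C. \<forall>c2\<in>?C. c1 \<noteq> c2 \<longrightarrow> c1 \<inter> c2 = {}" using ch_disj by blast
    show "\<forall>c\<in>?C. \<forall>r d d'. (\<forall>i\<in>c. d i = d' i) \<longrightarrow> comp T D R W c r d = comp T D R W c r d'"
      using comp_local ch_T by blast
    show "\<forall>c\<in>?C. \<forall>r d d'. (\<forall>i\<in>c. d i = d' i) \<longrightarrow> comp T D Q W c r d = comp T D Q W c r d'"
      using comp_local ch_T by blast
    show "finite {..<R \<nu>}" by simp
    show "\<forall>c\<in>?C. 0 \<le> B ^ card (sub c) \<and> (\<forall>r\<in>{..<R \<nu>}. ns c (comp T D R W c r) \<le> (B ^ card (sub c))\<^sup>2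
        \<and> ns c (comp T D Q W c r) \<le> (B ^ card (sub c))\<^sup>2)"
    proof -
      have "ns c (comp T D R W c r) \<le> (B ^ card (sub c))\<^sup>2 \<and> ns c (comp T D Q W c r) \<le> (B ^ card (sub c))\<^sup>2"
        if c: "c \<in> ?C" and r: "r \<in> {..<R \<nu>}" for c r
      proof
        have cT: "c \<in> T" using c ch_T by blast
        have pc: "prk N T D R c = R \<nu>" using prk_child[OF int c] .
        have "ns c (comp T D R W c r) \<le> SS R c" unfolding SS_def pc
          using r by (intro member_le_sum) (auto simp: ns_nonneg)
        then show "ns c (comp T D R W c r) \<le> (B ^ card (sub c))\<^sup>2" using SSbound[OF RR cT] by linarith
        have "ns c (comp T D Q W c r) \<le> SS Q c" unfolding SS_def pc
          using r by (intro member_le_sum) (auto simp: ns_nonneg)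
        then show "ns c (comp T D Q W c r) \<le> (B ^ card (sub c))\<^sup>2" using SSbound[OF Q cT] by linarith
      qed
      then show ?thesis using B0 by simp
    qed
    show "\<forall>c\<in>?C. l2 (\<lambda>(r,d). comp T D R W c r d - comp T D Q W c r d) ({..<R \<nu>} \<times> box D c) \<le> EE Q c"
      unfolding EE_def using prk_child[OF int] by simp
  qed
  finally have "l2 (\<lambda>(r,d). \<Sum>r'<Q \<nu>. W \<nu> r' r * ?G r' d) ({..<?P} \<times> box D \<nu>)
      \<le> B * (\<Sum>c\<in>?C. EE Q c * (\<Prod>c'\<in>?C - {c}. B ^ card (sub c')))"
    using B0 by (simp add: mult_left_mono)
  also have "\<dots> = (\<Sum>c\<in>?C. EE Q c * B ^ (card (sub \<nu>) - card (sub c)))"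
    unfolding sum_distrib_left
  proof (rule sum.cong[OF refl])
    fix c assume c: "c \<in> ?C"
    have "(\<Prod>c'\<in>?C - {c}. B ^ card (sub c')) = B ^ (\<Sum>c'\<in>?C - {c}. card (sub c'))"
      by (rule power_sum[symmetric])
    moreover have "card (sub \<nu>) = 1 + card (sub c) + (\<Sum>c'\<in>?C - {c}. card (sub c'))"
      using card_sub[OF int] sum.remove[OF ch_fin c, of "\<lambda>c. card (sub c)"] by simp
    ultimately have "B * (\<Prod>c'\<in>?C - {c}. B ^ card (sub c')) = B ^ (card (sub \<nu>) - card (sub c))"
      by simp
    then show "B * (EE Q c * (\<Prod>c'\<in>?C - {c}. B ^ card (sub c'))) = EE Q c * B ^ (card (sub \<nu>) - card (sub c))"
      by (simp add: algebra_simps)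
  qed
  finally show ?thesis .
qed

end


context ht begin

lemma errbound:
  assumes Q: "\<forall>\<mu>\<in>interior T. Q \<mu> \<le> R \<mu>" and "\<nu> \<in> T"
  shows "EE Q \<nu> \<le> (\<Sum>\<mu>\<in>interior T \<inter> sub \<nu>. tailsum Q \<mu> * B ^ (card (sub \<nu>) - 1 - card (children T \<mu>)))"
  using assms(2)
proof (induction "card \<nu>" arbitrary: \<nu> rule: less_induct)
  case less
  show ?case
  proof (cases "\<nu> \<in> interior T")
    case False
    then obtain n where n: "n \<in> {1..N}" "\<nu> = {n}" using leaf less.prems by blast
    have "EE Q \<nu> = l2 (\<lambda>x. 0) ({..<prk N T D R \<nu>} \<times> box D \<nu>)"
      unfolding EE_def n(2) by (rule l2_cong) (auto simp: comp_leaf)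
    also have "\<dots> = 0" by (simp add: l2_def)
    finally show ?thesis using int_sub_leaf[OF single_T[OF n(1)]] n(2) by simp
  next
    case True
    let ?C = "children T \<nu>"
    let ?s = "\<lambda>c. card (sub c)"
    let ?f = "\<lambda>\<mu>. tailsum Q \<mu> * B ^ (card (sub \<nu>) - 1 - card (children T \<mu>))"
    have nT: "\<nu> \<in> T" using True int_T by blast
    have QR: "Q \<nu> \<le> R \<nu>" using Q True by blast
    have EEc: "EE Q c * B ^ (?s \<nu> - ?s c) \<le> (\<Sum>\<mu>\<in>interior T \<inter> sub c. ?f \<mu>)" if c: "c \<in> ?C" for c
    proof -
      have cT: "c \<in> T" using c ch_T by blast
      have IH: "EE Q c \<le> (\<Sum>\<mu>\<in>interior T \<inter> sub c. tailsum Q \<mu> * B ^ (?s c - 1 - card (children T \<mu>)))"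
        using less.hyps[OF ch_card[OF nT c] cT] .
      have scn: "?s c \<le> ?s \<nu>"
      proof -
        have "?s c \<le> (\<Sum>c'\<in>?C. ?s c')" using c ch_fin by (intro member_le_sum) auto
        then show ?thesis using card_sub[OF True] by simp
      qed
      have "EE Q c * B ^ (?s \<nu> - ?s c)
          \<le> (\<Sum>\<mu>\<in>interior T \<inter> sub c. tailsum Q \<mu> * B ^ (?s c - 1 - card (children T \<mu>))) * B ^ (?s \<nu> - ?s c)"
        using IH B0 by (intro mult_right_mono) auto
      also have "\<dots> = (\<Sum>\<mu>\<in>interior T \<inter> sub c. tailsum Q \<mu> * (B ^ (?s c - 1 - card (children T \<mu>)) * B ^ (?s \<nu> - ?s c)))"
        by (simp add: sum_distrib_right mult.assoc)
      also have "\<dots> = (\<Sum>\<mu>\<in>interior T \<inter> sub c. ?f \<mu>)"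
      proof (rule sum.cong[OF refl])
        fix \<mu> assume m: "\<mu> \<in> interior T \<inter> sub c"
        have "card (children T \<mu>) + 1 \<le> ?s \<mu>" using card_ch_le m by blast
        moreover have "?s \<mu> \<le> ?s c" using sub_mono[of \<mu> c] m sub_fin by (intro card_mono) auto
        ultimately have "(?s c - 1 - card (children T \<mu>)) + (?s \<nu> - ?s c) = ?s \<nu> - 1 - card (children T \<mu>)"
          using scn by linarith
        then show "tailsum Q \<mu> * (B ^ (?s c - 1 - card (children T \<mu>)) * B ^ (?s \<nu> - ?s c)) = ?f \<mu>"
          by (simp add: power_add[symmetric])
      qed
      finally show ?thesis .
    qed
    let ?T1 = "\<lambda>(r,d). \<Sum>r'\<in>{Q \<nu>..<R \<nu>}. W \<nu> r' r * (\<Prod>c\<in>?C. comp T D R W c r' d)"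
    let ?T2 = "\<lambda>(r,d). \<Sum>r'<Q \<nu>. W \<nu> r' r * ((\<Prod>c\<in>?C. comp T D R W c r' d) - (\<Prod>c\<in>?C. comp T D Q W c r' d))"
    let ?A = "{..<prk N T D R \<nu>} \<times> box D \<nu>"
    have "EE Q \<nu> = l2 (\<lambda>x. ?T1 x + ?T2 x) ?A"
      unfolding EE_def by (rule l2_cong) (auto simp: diff_decomp[where Q=Q, OF True QR])
    also have "\<dots> \<le> l2 ?T1 ?A + l2 ?T2 ?A" by (rule l2_triangle)
    also have "\<dots> \<le> ?f \<nu> + (\<Sum>c\<in>?C. EE Q c * B ^ (?s \<nu> - ?s c))"
      using T1_bound[OF True, of Q] T2_bound[OF Q True] by (intro add_mono) auto
    also have "\<dots> \<le> ?f \<nu> + (\<Sum>c\<in>?C. \<Sum>\<mu>\<in>interior T \<inter> sub c. ?f \<mu>)"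
      using EEc by (intro add_left_mono sum_mono) auto
    also have "(\<Sum>c\<in>?C. \<Sum>\<mu>\<in>interior T \<inter> sub c. ?f \<mu>) = (\<Sum>\<mu>\<in>(\<Union>c\<in>?C. interior T \<inter> sub c). ?f \<mu>)"
    proof (rule sum.UNION_disjoint[symmetric])
      show "finite ?C" by (rule ch_fin)
      show "\<forall>c\<in>?C. finite (interior T \<inter> sub c)" using sub_fin by blast
      show "\<forall>c1\<in>?C. \<forall>c2\<in>?C. c1 \<noteq> c2 \<longrightarrow> (interior T \<inter> sub c1) \<inter> (interior T \<inter> sub c2) = {}"
        using sub_disj by blast
    qed
    also have "?f \<nu> + (\<Sum>\<mu>\<in>(\<Union>c\<in>?C. interior T \<inter> sub c). ?f \<mu>) = (\<Sum>\<mu>\<in>interior T \<inter> sub \<nu>. ?f \<mu>)"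
    proof -
      have "\<nu> \<notin> (\<Union>c\<in>?C. interior T \<inter> sub c)" using nu_notin_sub_ch by blast
      moreover have "finite (\<Union>c\<in>?C. interior T \<inter> sub c)" using ch_fin sub_fin by blast
      ultimately show ?thesis unfolding int_sub_decomp[OF True] by simp
    qed
    finally show ?thesis .
  qed
qed

end


lemma rank_sum:
  fixes f :: "nat \<Rightarrow> nat \<Rightarrow> real"
  shows "vec_space.rank n (mat n nc (\<lambda>(i,j). \<Sum>r<K. f i r * g r j)) \<le> K"
proof (induction K)
  case 0
  have "mat n nc (\<lambda>(i,j). \<Sum>r<0. f i r * g r j) = 0\<^sub>m n nc" by auto
  have "vec_space.rank n (0\<^sub>m n nc :: real mat) = 0" by (rule vec_space.rank_0I)
  then show ?case unfolding \<open>mat n nc (\<lambda>(i,j). \<Sum>r<0. f i r * g r j) = 0\<^sub>m n nc\<close> by simp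
next
  case (Suc K)
  have e: "mat n nc (\<lambda>(i,j). \<Sum>r<Suc K. f i r * g r j) = mat n nc (\<lambda>(i,j). \<Sum>r<K. f i r * g r j) + mat n nc (\<lambda>(i,j). f i K * g K j)"
    by (rule eq_matI) auto
  have "vec_space.rank n (mat n nc (\<lambda>(i,j). f i K * g K j)) \<le> 1"
    by (rule vec_space.rank_le_1_product_entries[of _ n nc "\<lambda>i. f i K" "\<lambda>j. g K j"]) auto
  then show ?case unfolding e using vec_space.rank_subadditive[of "mat n nc (\<lambda>(i,j). \<Sum>r<K. f i r * g r j)" n nc "mat n nc (\<lambda>(i,j). f i K * g K j)"] Suc
    by auto
qed

context mtree begin

lemma split_comp:
  assumes nT: "\<nu> \<in> T" and "\<mu> \<in> T" "\<nu> \<subset> \<mu>"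
  shows "\<exists>G. (\<forall>r d. comp T D Q W \<mu> r d = (\<Sum>s<Q (parent T \<nu>). comp T D Q W \<nu> s d * G r s d)) \<and>
             (\<forall>r s d d'. (\<forall>i. i \<notin> \<nu> \<longrightarrow> d i = d' i) \<longrightarrow> G r s d = G r s d')"
  using assms(2,3)
proof (induction "card \<mu>" arbitrary: \<mu> rule: less_induct)
  case less
  have "card \<nu> < card \<mu>" using less.prems T_fin psubset_card_mono by blast
  then have "2 \<le> card \<mu>" using card_T_ge1[OF nT] by linarith
  then have int: "\<mu> \<in> interior T" using int_iff less.prems(1) by blast
  obtain c0 where c0: "c0 \<in> children T \<mu>" "\<nu> \<subseteq> c0" using exists_child[OF nT less.prems(2)] by blast
  let ?C = "children T \<mu>"
  have dis: "\<forall>i\<in>c. d i = d' i" if "c \<in> ?C - {c0}" "\<forall>i. i \<notin> \<nu> \<longrightarrow> d i = d' i" for c and d d' :: "nat \<Rightarrow> nat"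
  proof -
    have "c \<inter> c0 = {}" using ch_disj[of c \<mu> c0] that c0 by blast
    then show ?thesis using that c0 by blast
  qed
  have locrest: "(\<Prod>c\<in>?C - {c0}. comp T D Q W c r d) = (\<Prod>c\<in>?C - {c0}. comp T D Q W c r d')"
    if "\<forall>i. i \<notin> \<nu> \<longrightarrow> d i = d' i" for r and d d' :: "nat \<Rightarrow> nat"
  proof (rule prod.cong[OF refl])
    fix c assume c: "c \<in> ?C - {c0}"
    then have "c \<in> T" using ch_T by blast
    then show "comp T D Q W c r d = comp T D Q W c r d'" using comp_local dis[OF c that] by blast
  qed
  have split0: "(\<Prod>c\<in>?C. comp T D Q W c r d) = comp T D Q W c0 r d * (\<Prod>c\<in>?C - {c0}. comp T D Q W c r d)" for r d
    by (rule prod.remove[OF ch_fin c0(1)])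
  show ?case
  proof (cases "\<nu> = c0")
    case True
    have par: "parent T \<nu> = \<mu>" using parent_eq[OF less.prems(1)] c0(1) True by simp
    define G where "G = (\<lambda>r s d. W \<mu> s r * (\<Prod>c\<in>?C - {c0}. comp T D Q W c s d))"
    have "comp T D Q W \<mu> r d = (\<Sum>s<Q (parent T \<nu>). comp T D Q W \<nu> s d * G r s d)" for r d
      unfolding comp_int[OF int] G_def split0 True using par True by (simp add: algebra_simps)
    moreover have "G r s d = G r s d'" if "\<forall>i. i \<notin> \<nu> \<longrightarrow> d i = d' i" for r s d d'
      unfolding G_def using locrest[OF that] by simp
    ultimately show ?thesis by blast
  next
    case False
    then have sub: "\<nu> \<subset> c0" using c0 by blast
    have c0T: "c0 \<in> T" using c0 ch_T by blast
    obtain G0 where G0: "\<forall>r d. comp T D Q W c0 r d = (\<Sum>s<Q (parent T \<nu>). comp T D Q W \<nu> s d * G0 r s d)"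
      "\<forall>r s d d'. (\<forall>i. i \<notin> \<nu> \<longrightarrow> d i = d' i) \<longrightarrow> G0 r s d = G0 r s d'"
      using less.hyps[OF ch_card[OF less.prems(1) c0(1)] c0T sub] by blast
    define G where "G = (\<lambda>r s d. \<Sum>r'<Q \<mu>. W \<mu> r' r * G0 r' s d * (\<Prod>c\<in>?C - {c0}. comp T D Q W c r' d))"
    have "comp T D Q W \<mu> r d = (\<Sum>s<Q (parent T \<nu>). comp T D Q W \<nu> s d * G r s d)" for r d
    proof -
      have "comp T D Q W \<mu> r d = (\<Sum>r'<Q \<mu>. W \<mu> r' r * (comp T D Q W c0 r' d * (\<Prod>c\<in>?C - {c0}. comp T D Q W c r' d)))"
        unfolding comp_int[OF int] split0 ..
      also have "\<dots> = (\<Sum>r'<Q \<mu>. \<Sum>s<Q (parent T \<nu>). comp T D Q W \<nu> s d * (W \<mu> r' r * G0 r' s d * (\<Prod>c\<in>?C - {c0}. comp T D Q W c r' d)))"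
        unfolding G0(1)[rule_format] by (simp add: sum_distrib_left sum_distrib_right algebra_simps)
      also have "\<dots> = (\<Sum>s<Q (parent T \<nu>). \<Sum>r'<Q \<mu>. comp T D Q W \<nu> s d * (W \<mu> r' r * G0 r' s d * (\<Prod>c\<in>?C - {c0}. comp T D Q W c r' d)))"
        by (rule sum.swap)
      also have "\<dots> = (\<Sum>s<Q (parent T \<nu>). comp T D Q W \<nu> s d * G r s d)"
        unfolding G_def by (simp add: sum_distrib_left)
      finally show ?thesis .
    qed
    moreover have "G r s d = G r s d'" if "\<forall>i. i \<notin> \<nu> \<longrightarrow> d i = d' i" for r s d d'
    proof -
      have "G0 r' s d = G0 r' s d'" for r' using G0(2) that by blast
      then show ?thesis unfolding G_def using locrest[OF that] by simp
    qed
    ultimately show ?thesis by blast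
  qed
qed

lemma rank_bound:
  assumes "\<nu> \<in> T" "\<nu> \<noteq> {1..N}"
  shows "mrank (matricize N D (\<lambda>d. comp T D Q W {1..N} 0 d) \<nu>) \<le> Q (parent T \<nu>)"
proof -
  have "\<nu> \<subset> {1..N}" using assms T_sub by blast
  then obtain G where G: "\<forall>r d. comp T D Q W {1..N} r d = (\<Sum>s<Q (parent T \<nu>). comp T D Q W \<nu> s d * G r s d)"
      "\<forall>r s d d'. (\<forall>i. i \<notin> \<nu> \<longrightarrow> d i = d' i) \<longrightarrow> G r s d = G r s d'"
    using split_comp[OF assms(1) root_T] by blast
  let ?K = "Q (parent T \<nu>)"
  let ?m = "\<Prod>i\<in>\<nu>. D i" and ?n = "\<Prod>j\<in>{1..N} - \<nu>. D j"
  define f where "f = (\<lambda>p s. comp T D Q W \<nu> s (decode N D \<nu> p 0))"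
  define g where "g = (\<lambda>s q. G 0 s (decode N D \<nu> 0 q))"
  have "(\<lambda>(p,q). comp T D Q W {1..N} 0 (decode N D \<nu> p q)) = (\<lambda>(p,q). \<Sum>s<?K. f p s * g s q)"
  proof (intro ext, clarify)
    fix p q
    have "comp T D Q W \<nu> s (decode N D \<nu> p q) = f p s" for s
      unfolding f_def by (rule comp_local[OF assms(1)]) (simp add: decode_def)
    moreover have "G 0 s (decode N D \<nu> p q) = g s q" for s
      unfolding g_def using G(2) by (simp add: decode_def)
    ultimately show "comp T D Q W {1..N} 0 (decode N D \<nu> p q) = (\<Sum>s<?K. f p s * g s q)"
      using G(1) by simp
  qed
  then have "matricize N D (\<lambda>d. comp T D Q W {1..N} 0 d) \<nu> = mat ?m ?n (\<lambda>(p,q). \<Sum>s<?K. f p s * g s q)"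
    unfolding matricize_def by simp
  then show ?thesis unfolding mrank_def using rank_sum by simp
qed

end


theorem proposition1:
  fixes N :: nat and D :: "nat \<Rightarrow> nat" and T :: "nat set set"
    and R :: "nat set \<Rightarrow> nat" and W :: "nat set \<Rightarrow> nat \<Rightarrow> nat \<Rightarrow> real"
    and \<epsilon> :: real and R' :: "nat set \<Rightarrow> nat"
  assumes N2: "N \<ge> 2"
    and Dpos: "\<forall>n\<in>{1..N}. D n \<ge> 1"
    and tree: "mode_tree N T"
    and Rpos: "\<forall>\<nu>\<in>interior T. R \<nu> \<ge> 1"
    and R'pos: "\<forall>\<nu>\<in>interior T. R' \<nu> \<ge> 1"
    and ordered: "\<forall>\<nu>\<in>interior T. \<forall>r r'. r \<le> r' \<and> r' < R \<nu> \<longrightarrow>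
                    sigma N T D R W \<nu> r' \<le> sigma N T D R W \<nu> r"
    and eps: "\<epsilon> \<ge> 0"
    and tail: "\<forall>\<nu>\<in>interior T.
       (\<Sum>r\<in>{R' \<nu>..<R \<nu>}. sigma N T D R W \<nu> r)
         \<le> \<epsilon> * inverse (real (card T - N)) *
           (Max ((wnorm N T D R W) ` T)) powi (int (card (children T \<nu>)) + 1 - int (card T))"
  shows "Inf ((\<lambda>X. tnorm N D (\<lambda>d. end_tensor N T D R W d - X d)) `
           {X. \<forall>\<nu>\<in>T - {{1..N}}. mrank (matricize N D X \<nu>) \<le> R' (parent T \<nu>)}) \<le> \<epsilon>"
proof -
  interpret mtree N T by unfold_locales (rule tree)
  define B where "B = Max ((wnorm N T D R W) ` T)"
  have Bge: "\<forall>\<nu>\<in>T. wnorm N T D R W \<nu> \<le> B" unfolding B_def using finite_T by (auto intro: Max_ge)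
  interpret ht N T D R W B by unfold_locales (rule Bge)
  define Q0 where "Q0 = (\<lambda>\<nu>. min (R \<nu>) (R' \<nu>))"
  have Q0R: "\<forall>\<mu>\<in>interior T. Q0 \<mu> \<le> R \<mu>" unfolding Q0_def by simp
  define X0 where "X0 = (\<lambda>d. comp T D Q0 W {1..N} 0 d)"
  let ?S = "{X. \<forall>\<nu>\<in>T - {{1..N}}. mrank (matricize N D X \<nu>) \<le> R' (parent T \<nu>)}"
  have X0mem: "X0 \<in> ?S"
  proof (intro CollectI ballI)
    fix \<nu> assume \<nu>: "\<nu> \<in> T - {{1..N}}"
    then have "mrank (matricize N D X0 \<nu>) \<le> Q0 (parent T \<nu>)"
      unfolding X0_def using rank_bound by blast
    also have "\<dots> \<le> R' (parent T \<nu>)" unfolding Q0_def by simp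
    finally show "mrank (matricize N D X0 \<nu>) \<le> R' (parent T \<nu>)" .
  qed
  have root_int: "{1..N} \<in> interior T" using int_iff[OF root_T] N2 by simp
  have prk_root: "prk N T D R {1..N} = 1" unfolding prk_def by simp
  have tn: "tnorm N D (\<lambda>d. end_tensor N T D R W d - X0 d) = EE Q0 {1..N}"
  proof -
    have "(EE Q0 {1..N})\<^sup>2 = (\<Sum>r<1. \<Sum>d\<in>box D {1..N}. (comp T D R W {1..N} r d - comp T D Q0 W {1..N} r d)\<^sup>2)"
      unfolding EE_def prk_root by (rule l2_pair_sq)
    also have "\<dots> = (\<Sum>d\<in>idx_box N D. (end_tensor N T D R W d - X0 d)\<^sup>2)"
      unfolding end_tensor_def X0_def idx_box_def box_def by simp
    finally have "sqrt ((EE Q0 {1..N})\<^sup>2) = tnorm N D (\<lambda>d. end_tensor N T D R W d - X0 d)"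
      unfolding tnorm_def by simp
    moreover have "0 \<le> EE Q0 {1..N}" unfolding EE_def by (rule l2_nonneg)
    then have "sqrt ((EE Q0 {1..N})\<^sup>2) = EE Q0 {1..N}" by simp
    ultimately show ?thesis by simp
  qed
  let ?k = "real (card T - N)"
  have kpos: "0 < ?k"
  proof -
    have "card (interior T) \<noteq> 0" using root_int finite_T
      by (metis card_0_eq empty_iff finite_subset int_T subsetI)
    then show ?thesis using card_interior by simp
  qed
  have each: "tailsum Q0 \<mu> * B ^ (card T - 1 - card (children T \<mu>)) \<le> \<epsilon> * inverse ?k"
    if \<mu>: "\<mu> \<in> interior T" for \<mu>
  proof -
    let ?e = "card T - 1 - card (children T \<mu>)"
    have tlq: "tailsum Q0 \<mu> = (\<Sum>r\<in>{R' \<mu>..<R \<mu>}. sigma N T D R W \<mu> r)"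
    proof -
      have "{Q0 \<mu>..<R \<mu>} = {R' \<mu>..<R \<mu>}" unfolding Q0_def by auto
      then show ?thesis unfolding tailsum_def by simp
    qed
    have "card (children T \<mu>) + 1 \<le> card (sub \<mu>)" using card_ch_le[OF \<mu>] .
    moreover have "card (sub \<mu>) \<le> card T" using finite_T unfolding sub_def by (intro card_mono) auto
    ultimately have ex: "int (card (children T \<mu>)) + 1 - int (card T) = - int ?e" by linarith
    have t0: "tailsum Q0 \<mu> \<le> \<epsilon> * inverse ?k * B powi (int (card (children T \<mu>)) + 1 - int (card T))"
      using tail \<mu> unfolding tlq B_def by blast
    have "tailsum Q0 \<mu> \<le> \<epsilon> * inverse ?k * B powi (- int ?e)"
      using t0 unfolding ex .
    also have "B powi (- int ?e) = inverse (B ^ ?e)" by (simp add: power_int_minus)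
    finally have "tailsum Q0 \<mu> * B ^ ?e \<le> \<epsilon> * inverse ?k * inverse (B ^ ?e) * B ^ ?e"
      using B0 by (intro mult_right_mono) auto
    also have "\<dots> \<le> \<epsilon> * inverse ?k"
    proof (cases "B ^ ?e = 0")
      case True
      have z: "\<epsilon> * inverse ?k * inverse (B ^ ?e) * B ^ ?e = 0" by (simp only: True mult_zero_right)
      have ge: "0 \<le> \<epsilon> * inverse ?k" using eps kpos by simp
      from z ge show ?thesis by linarith
    next
      case False
      have o: "inverse (B ^ ?e) * B ^ ?e = 1" using False by (rule left_inverse)
      have "\<epsilon> * inverse ?k * inverse (B ^ ?e) * B ^ ?e = \<epsilon> * inverse ?k * (inverse (B ^ ?e) * B ^ ?e)"
        by (simp only: mult.assoc)
      also have "\<dots> = \<epsilon> * inverse ?k" by (simp only: o mult_1_right)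
      finally show ?thesis by (rule eq_refl)
    qed
    finally show ?thesis .
  qed
  have "EE Q0 {1..N} \<le> (\<Sum>\<mu>\<in>interior T \<inter> sub {1..N}. tailsum Q0 \<mu> * B ^ (card (sub {1..N}) - 1 - card (children T \<mu>)))"
    by (rule errbound[OF Q0R root_T])
  also have "\<dots> = (\<Sum>\<mu>\<in>interior T. tailsum Q0 \<mu> * B ^ (card T - 1 - card (children T \<mu>)))"
  proof -
    have "interior T \<inter> T = interior T" using int_T by blast
    then show ?thesis unfolding sub_root by simp
  qed
  also have "\<dots> \<le> (\<Sum>\<mu>\<in>interior T. \<epsilon> * inverse ?k)" by (rule sum_mono) (rule each)
  also have "\<dots> = \<epsilon>" using card_interior kpos by simp
  finally have le: "tnorm N D (\<lambda>d. end_tensor N T D R W d - X0 d) \<le> \<epsilon>" using tn by simp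
  have "Inf ((\<lambda>X. tnorm N D (\<lambda>d. end_tensor N T D R W d - X d)) ` ?S)
      \<le> tnorm N D (\<lambda>d. end_tensor N T D R W d - X0 d)"
  proof (rule cInf_lower)
    show "tnorm N D (\<lambda>d. end_tensor N T D R W d - X0 d) \<in> (\<lambda>X. tnorm N D (\<lambda>d. end_tensor N T D R W d - X d)) ` ?S"
      using X0mem by (rule imageI)
    show "bdd_below ((\<lambda>X. tnorm N D (\<lambda>d. end_tensor N T D R W d - X d)) ` ?S)"
      by (rule bdd_belowI[where m=0]) (auto simp: tnorm_def sum_nonneg)
  qed
  then show ?thesis using le by linarith
qed


end
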